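(* Let $(\mathcal{T},\mathcal{F},\mathcal{S})$ be a tree of fusion systems satisfying $(H)$ with completion $\mathcal{F}_\mathcal{T}$ on $S=\mathcal{S}(v_* )$, and assume (a) $\mathcal{F}(v)$ is saturated for every vertex $v$, and (b) $\mathcal{F}(e)=\mathcal{F}_{\mathcal{S}(e)}(\mathcal{S}(e))$ for every edge $e$. Let $P\trianglelefteq Q\le S$ with $P$ $\mathcal{F}_\mathcal{T}$-centric. If $\operatorname{Rep}_{\mathcal{F}_\mathcal{T}}(P,\mathcal{F})$ is a tree, then the image of the restriction map $\operatorname{res}^Q_P:\operatorname{Rep}_{\mathcal{F}_\mathcal{T}}(Q,\mathcal{F})\to\operatorname{Rep}_{\mathcal{F}_\mathcal{T}}(P,\mathcal{F})$ equals the subgraph $\operatorname{Rep}_{\mathcal{F}_\mathcal{T}}(P,\mathcal{F})^{\operatorname{Aut}_Q(P)}$ fixed by $\operatorname{Aut}_Q(P)$.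
   Context: Maps act on the right; $\alpha\circ\beta$ means first $\alpha$ then $\beta$. Trees of fusion systems, Hypothesis $(H)$ (there is a vertex $v_*$ such that for each vertex $v\ne v_*$ the edge $e$ at $v$ on the path to $v_*$ has $\mathcal{S}(f_{ev}):\mathcal{S}(e)\to\mathcal{S}(v)$ an isomorphism), the identification of all $\mathcal{S}(v),\mathcal{S}(e)$ with subgroups of $S$, and the completion $\mathcal{F}_\mathcal{T}$ (smallest fusion system on $S$ containing all $\mathcal{F}(v)$) are as follows: a tree of fusion systems consists of a finite tree $\mathcal{T}$, finite $p$-groups $\mathcal{S}(v),\mathcal{S}(e)$, fusion systems $\mathcal{F}(v)$ on $\mathcal{S}(v)$, $\mathcal{F}(e)$ on $\mathcal{S}(e)$, and for $v$ incident on $e$ a monomorphism $\mathcal{S}(f_{ev})$ which is an injective morphism of fusion systems $\mathcal{F}(e)\to\mathcal{F}(v)$. $\mathcal{F}_S(S)$ denotes the fusion system whose morphisms are conjugations by elements of $S$. $P$ is $\mathcal{F}$-centric if $C_S(P\varphi)=Z(P\varphi)$ for all $\varphi\in\operatorname{Hom}_\mathcal{F}(P,S)$. Saturation is the standard notion: every fully normalised subgroup is fully centralised and fully automised, and each $\varphi\in\operatorname{Hom}_\mathcal{F}(P,S)$ with $P\varphi$ fully centralised extends to $N_\varphi=\{g\in N_S(P)\mid \varphi^{-1}c_g\varphi\in\operatorname{Aut}_S(P\varphi)\}$. $\operatorname{Rep}_{\mathcal{F}_\mathcal{T}}(P,\mathcal{F})$: vertices are classes $[\alpha]_{\mathcal{F}(v)}$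 of $\alpha\in\operatorname{Hom}_{\mathcal{F}_\mathcal{T}}(P,\mathcal{S}(v))$ where $\alpha\sim\beta$ iff $\alpha\circ\gamma=\beta$ for some $\gamma\in\operatorname{Iso}_{\mathcal{F}(v)}(P\alpha,P\beta)$; edges are classes $[\gamma]_{\mathcal{F}(e)}$ of $\gamma\in\operatorname{Hom}_{\mathcal{F}_\mathcal{T}}(P,\mathcal{S}(e))$ defined similarly with $\mathcal{F}(e)$; the edge $[\gamma]_{\mathcal{F}(e)}$, $e=(v,w)$, joins $[\gamma\circ\iota_{\mathcal{S}(e)}^{\mathcal{S}(v)}]_{\mathcal{F}(v)}$ and $[\gamma\circ\iota_{\mathcal{S}(e)}^{\mathcal{S}(w)}]_{\mathcal{F}(w)}$. The restriction map $\operatorname{res}^Q_P$ sends $[\varphi]_{\mathcal{F}(x)}\mapsto[\varphi|_P]_{\mathcal{F}(x)}$ ($x$ a vertex or edge); it is a graph homomorphism. $\operatorname{Aut}_{\mathcal{F}_\mathcal{T}}(P)$ (hence its subgroup $\operatorname{Aut}_Q(P)$ of conjugations by elements of $Q$) acts on $\operatorname{Rep}_{\mathcal{F}_\mathcal{T}}(P,\mathcal{F})$ by $\psi\cdot[\varphi]_{\mathcal{F}(x)}=[\psi\circ\varphi]_{\mathcal{F}(x)}$. *)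

theory Defs
  imports "HOL-Algebra.Algebra" "HOL-Library.FuncSet"
begin

definition ugraph :: "'v set \<Rightarrow> 'e set \<Rightarrow> ('e \<Rightarrow> 'v set) \<Rightarrow> bool" where
  "ugraph V E ends \<longleftrightarrow> (\<forall>e\<in>E. \<exists>u w. u \<in> V \<and> w \<in> V \<and> u \<noteq> w \<and> ends e = {u, w})"

definition upath :: "'v set \<Rightarrow> 'e set \<Rightarrow> ('e \<Rightarrow> 'v set) \<Rightarrow> 'v list \<Rightarrow> 'e list \<Rightarrow> bool" where
  "upath V E ends vs es \<longleftrightarrow> vs \<noteq> [] \<and> length vs = Suc (length es) \<and> distinct vs \<and>
     set vs \<subseteq> V \<and> set es \<subseteq> E \<and> (\<forall>i<length es. ends (es ! i) = {vs ! i, vs ! Suc i})"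

text \<open>A cycle: a path with at least two vertices closed up by a further edge
  (so two parallel edges form a cycle, as usual for multigraphs).\<close>
definition ucycle :: "'v set \<Rightarrow> 'e set \<Rightarrow> ('e \<Rightarrow> 'v set) \<Rightarrow> 'v list \<Rightarrow> 'e list \<Rightarrow> 'e \<Rightarrow> bool" where
  "ucycle V E ends vs es e \<longleftrightarrow> upath V E ends vs es \<and> 2 \<le> length vs \<and> e \<in> E \<and> e \<notin> set es \<and>
     ends e = {last vs, hd vs}"

definition uconnected :: "'v set \<Rightarrow> 'e set \<Rightarrow> ('e \<Rightarrow> 'v set) \<Rightarrow> bool" where
  "uconnected V E ends \<longleftrightarrow>
     (\<forall>u\<in>V. \<forall>w\<in>V. \<exists>vs es. upath V E ends vs es \<and> hd vs = u \<and> last vs = w)"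

definition utree :: "'v set \<Rightarrow> 'e set \<Rightarrow> ('e \<Rightarrow> 'v set) \<Rightarrow> bool" where
  "utree V E ends \<longleftrightarrow> ugraph V E ends \<and> V \<noteq> {} \<and> uconnected V E ends \<and>
     \<not> (\<exists>vs es e. ucycle V E ends vs es e)"

section \<open>Fusion systems (maps act on the right; composition "first alpha then beta")\<close>

text \<open>A morphism of a fusion system is a triple (P, Q, phi): phi an injective
  homomorphism P -> Q, stored as an extensional function on P.\<close>
type_synonym 'g fus = "('g set \<times> 'g set \<times> ('g \<Rightarrow> 'g)) set"

definition conjm :: "('g, 'b) monoid_scheme \<Rightarrow> 'g \<Rightarrow> 'g \<Rightarrow> 'g" where
  "conjm G g = (\<lambda>x. inv\<^bsub>G\<^esub> g \<otimes>\<^bsub>G\<^esub> x \<otimes>\<^bsub>G\<^esub> g)"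

definition sgrp :: "('g, 'b) monoid_scheme \<Rightarrow> 'g set \<Rightarrow> 'g set \<Rightarrow> bool" where
  "sgrp G S P \<longleftrightarrow> subgroup P G \<and> P \<subseteq> S"

definition injhom :: "('g, 'b) monoid_scheme \<Rightarrow> 'g set \<Rightarrow> 'g set \<Rightarrow> ('g \<Rightarrow> 'g) \<Rightarrow> bool" where
  "injhom G P Q \<phi> \<longleftrightarrow> \<phi> \<in> extensional P \<and> \<phi> \<in> P \<rightarrow> Q \<and> inj_on \<phi> P \<and>
     (\<forall>x\<in>P. \<forall>y\<in>P. \<phi> (x \<otimes>\<^bsub>G\<^esub> y) = \<phi> x \<otimes>\<^bsub>G\<^esub> \<phi> y)"

definition Hom :: "'g fus \<Rightarrow> 'g set \<Rightarrow> 'g set \<Rightarrow> ('g \<Rightarrow> 'g) set" where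
  "Hom F P Q = {\<phi>. (P, Q, \<phi>) \<in> F}"

definition FS :: "('g, 'b) monoid_scheme \<Rightarrow> 'g set \<Rightarrow> 'g fus" where
  "FS G S = {(P, Q, \<phi>). sgrp G S P \<and> sgrp G S Q \<and>
     (\<exists>g\<in>S. conjm G g ` P \<subseteq> Q \<and> \<phi> = restrict (conjm G g) P)}"

definition fusion_system :: "('g, 'b) monoid_scheme \<Rightarrow> 'g set \<Rightarrow> 'g fus \<Rightarrow> bool" where
  "fusion_system G S F \<longleftrightarrow>
     (\<forall>(P, Q, \<phi>)\<in>F. sgrp G S P \<and> sgrp G S Q \<and> injhom G P Q \<phi>) \<and>
     FS G S \<subseteq> F \<and>
     (\<forall>P Q R \<phi> \<psi>. (P, Q, \<phi>) \<in> F \<and> (Q, R, \<psi>) \<in> F \<longrightarrow> (P, R, compose P \<psi> \<phi>) \<in> F) \<and>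
     (\<forall>(P, Q, \<phi>)\<in>F. (P, \<phi> ` P, \<phi>) \<in> F \<and> (\<phi> ` P, P, restrict (inv_into P \<phi>) (\<phi> ` P)) \<in> F)"

definition normalizer_in :: "('g, 'b) monoid_scheme \<Rightarrow> 'g set \<Rightarrow> 'g set \<Rightarrow> 'g set" where
  "normalizer_in G S P = {g \<in> S. conjm G g ` P = P}"

definition centralizer_in :: "('g, 'b) monoid_scheme \<Rightarrow> 'g set \<Rightarrow> 'g set \<Rightarrow> 'g set" where
  "centralizer_in G S P = {g \<in> S. \<forall>x\<in>P. g \<otimes>\<^bsub>G\<^esub> x = x \<otimes>\<^bsub>G\<^esub> g}"

definition center_of :: "('g, 'b) monoid_scheme \<Rightarrow> 'g set \<Rightarrow> 'g set" where
  "center_of G P = centralizer_in G P P"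

definition AutX :: "('g, 'b) monoid_scheme \<Rightarrow> 'g set \<Rightarrow> 'g set \<Rightarrow> ('g \<Rightarrow> 'g) set" where
  "AutX G H P = (\<lambda>g. restrict (conjm G g) P) ` normalizer_in G H P"

definition fully_normalised :: "('g, 'b) monoid_scheme \<Rightarrow> 'g set \<Rightarrow> 'g fus \<Rightarrow> 'g set \<Rightarrow> bool" where
  "fully_normalised G S F P \<longleftrightarrow>
     (\<forall>\<phi>\<in>Hom F P S. card (normalizer_in G S (\<phi> ` P)) \<le> card (normalizer_in G S P))"

definition fully_centralised :: "('g, 'b) monoid_scheme \<Rightarrow> 'g set \<Rightarrow> 'g fus \<Rightarrow> 'g set \<Rightarrow> bool" where
  "fully_centralised G S F P \<longleftrightarrow>
     (\<forall>\<phi>\<in>Hom F P S. card (centralizer_in G S (\<phi> ` P)) \<le> card (centralizer_in G S P))"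

text \<open>Aut_S(P) is a Sylow p-subgroup of Aut_F(P).\<close>
definition fully_automised :: "nat \<Rightarrow> ('g, 'b) monoid_scheme \<Rightarrow> 'g set \<Rightarrow> 'g fus \<Rightarrow> 'g set \<Rightarrow> bool" where
  "fully_automised p G S F P \<longleftrightarrow>
     AutX G S P \<subseteq> Hom F P P \<and>
     card (AutX G S P) = p ^ multiplicity p (card (Hom F P P))"

definition N_phi :: "('g, 'b) monoid_scheme \<Rightarrow> 'g set \<Rightarrow> 'g set \<Rightarrow> ('g \<Rightarrow> 'g) \<Rightarrow> 'g set" where
  "N_phi G S P \<phi> = {g \<in> normalizer_in G S P.
     restrict (\<lambda>y. \<phi> (conjm G g (inv_into P \<phi> y))) (\<phi> ` P) \<in> AutX G S (\<phi> ` P)}"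

definition saturated :: "nat \<Rightarrow> ('g, 'b) monoid_scheme \<Rightarrow> 'g set \<Rightarrow> 'g fus \<Rightarrow> bool" where
  "saturated p G S F \<longleftrightarrow> fusion_system G S F \<and>
     (\<forall>P. sgrp G S P \<and> fully_normalised G S F P \<longrightarrow>
          fully_centralised G S F P \<and> fully_automised p G S F P) \<and>
     (\<forall>P \<phi>. \<phi> \<in> Hom F P S \<and> fully_centralised G S F (\<phi> ` P) \<longrightarrow>
          (\<exists>\<psi>\<in>Hom F (N_phi G S P \<phi>) S. restrict \<psi> P = \<phi>))"

definition centric :: "('g, 'b) monoid_scheme \<Rightarrow> 'g set \<Rightarrow> 'g fus \<Rightarrow> 'g set \<Rightarrow> bool" where
  "centric G S F P \<longleftrightarrow>
     (\<forall>\<phi>\<in>Hom F P S. centralizer_in G S (\<phi> ` P) = center_of G (\<phi> ` P))"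

section \<open>Trees of fusion systems (all S(v), S(e) identified with subgroups of S)\<close>

definition completion :: "('g, 'b) monoid_scheme \<Rightarrow> 'g set \<Rightarrow> 'v set \<Rightarrow> ('v \<Rightarrow> 'g fus) \<Rightarrow> 'g fus" where
  "completion G S V Fv = \<Inter> {F. fusion_system G S F \<and> (\<forall>v\<in>V. Fv v \<subseteq> F)}"

definition cls :: "'g fus \<Rightarrow> 'g fus \<Rightarrow> 'g set \<Rightarrow> 'g set \<Rightarrow> ('g \<Rightarrow> 'g) \<Rightarrow> ('g \<Rightarrow> 'g) set" where
  "cls FT Fx P T \<alpha> = {\<beta>. (P, T, \<beta>) \<in> FT \<and>
     (\<exists>\<gamma>. (\<alpha> ` P, \<beta> ` P, \<gamma>) \<in> Fx \<and> bij_betw \<gamma> (\<alpha> ` P) (\<beta> ` P) \<and> \<beta> = compose P \<gamma> \<alpha>)}"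

text \<open>Vertices (I = V) resp. edges (I = E) of Rep_{F_T}(P, F): pairs (x, [alpha]_{F(x)}).\<close>
definition rep_nodes :: "'g fus \<Rightarrow> ('i \<Rightarrow> 'g fus) \<Rightarrow> ('i \<Rightarrow> 'g set) \<Rightarrow> 'i set \<Rightarrow> 'g set
    \<Rightarrow> ('i \<times> ('g \<Rightarrow> 'g) set) set" where
  "rep_nodes FT F T I P = {(i, cls FT (F i) P (T i) \<alpha>) | i \<alpha>. i \<in> I \<and> (P, T i, \<alpha>) \<in> FT}"

text \<open>The edge [gamma]_{F(e)} joins [gamma o incl]_{F(v)} for the two ends v of e.\<close>
definition rep_ends :: "'g fus \<Rightarrow> ('v \<Rightarrow> 'g fus) \<Rightarrow> ('v \<Rightarrow> 'g set) \<Rightarrow> ('e \<Rightarrow> 'v set) \<Rightarrow> 'g set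
    \<Rightarrow> 'e \<times> ('g \<Rightarrow> 'g) set \<Rightarrow> ('v \<times> ('g \<Rightarrow> 'g) set) set" where
  "rep_ends FT Fv Sv ends P x =
     (\<lambda>v. (v, cls FT (Fv v) P (Sv v) (SOME \<gamma>. \<gamma> \<in> snd x))) ` ends (fst x)"

definition rep_res :: "'g fus \<Rightarrow> ('i \<Rightarrow> 'g fus) \<Rightarrow> ('i \<Rightarrow> 'g set) \<Rightarrow> 'g set
    \<Rightarrow> 'i \<times> ('g \<Rightarrow> 'g) set \<Rightarrow> 'i \<times> ('g \<Rightarrow> 'g) set" where
  "rep_res FT F T P x =
     (fst x, cls FT (F (fst x)) P (T (fst x)) (restrict (SOME \<phi>. \<phi> \<in> snd x) P))"

definition rep_act :: "'g fus \<Rightarrow> ('i \<Rightarrow> 'g fus) \<Rightarrow> ('i \<Rightarrow> 'g set) \<Rightarrow> 'g set \<Rightarrow> ('g \<Rightarrow> 'g)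
    \<Rightarrow> 'i \<times> ('g \<Rightarrow> 'g) set \<Rightarrow> 'i \<times> ('g \<Rightarrow> 'g) set" where
  "rep_act FT F T P \<psi> x =
     (fst x, cls FT (F (fst x)) P (T (fst x)) (compose P (SOME \<phi>. \<phi> \<in> snd x) \<psi>))"

definition AutQ :: "('g, 'b) monoid_scheme \<Rightarrow> 'g set \<Rightarrow> 'g set \<Rightarrow> ('g \<Rightarrow> 'g) set" where
  "AutQ G Q P = (\<lambda>g. restrict (conjm G g) P) ` Q"

definition rep_fixed :: "'g fus \<Rightarrow> ('i \<Rightarrow> 'g fus) \<Rightarrow> ('i \<Rightarrow> 'g set) \<Rightarrow> 'i set \<Rightarrow> 'g set
    \<Rightarrow> ('g \<Rightarrow> 'g) set \<Rightarrow> ('i \<times> ('g \<Rightarrow> 'g) set) set" where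
  "rep_fixed FT F T I P A = {x \<in> rep_nodes FT F T I P. \<forall>\<psi>\<in>A. rep_act FT F T P \<psi> x = x}"

end

theory Submission
  imports Defs
begin


lemma injhomD:
  assumes "injhom G P Q \<phi>"
  shows "\<phi> \<in> extensional P" "\<phi> \<in> P \<rightarrow> Q" "inj_on \<phi> P"
    "\<And>x y. x \<in> P \<Longrightarrow> y \<in> P \<Longrightarrow> \<phi> (x \<otimes>\<^bsub>G\<^esub> y) = \<phi> x \<otimes>\<^bsub>G\<^esub> \<phi> y"
  using assms unfolding injhom_def by simp_all

lemma (in group) injhom_carrier:
  assumes "injhom G P Q \<phi>" "subgroup Q G" "x \<in> P"
  shows "\<phi> x \<in> carrier G" "\<phi> x \<in> Q"
proof -
  show "\<phi> x \<in> Q" using injhomD(2)[OF assms(1)] assms(3) by (rule funcset_mem)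
  then show "\<phi> x \<in> carrier G" by (rule subgroup.mem_carrier[OF assms(2)])
qed

lemma (in group) injhom_one:
  assumes "injhom G P Q \<phi>" "subgroup P G" "subgroup Q G"
  shows "\<phi> \<one> = \<one>"
proof -
  have o: "\<one> \<in> P" using assms(2) by (rule subgroup.one_closed)
  have c: "\<phi> \<one> \<in> carrier G" using injhom_carrier[OF assms(1,3) o] by simp
  have "\<phi> (\<one> \<otimes> \<one>) = \<phi> \<one> \<otimes> \<phi> \<one>" using injhomD(4)[OF assms(1) o o] .
  then have "\<phi> \<one> = \<phi> \<one> \<otimes> \<phi> \<one>" by simp
  then show ?thesis using c by simp
qed

lemma (in group) injhom_inv:
  assumes "injhom G P Q \<phi>" "subgroup P G" "subgroup Q G" "x \<in> P"
  shows "\<phi> (inv x) = inv (\<phi> x)"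
proof -
  have ix: "inv x \<in> P" using assms(2,4) by (rule subgroup.m_inv_closed)
  have xc: "x \<in> carrier G" by (rule subgroup.mem_carrier[OF assms(2,4)])
  have "\<phi> x \<otimes> \<phi> (inv x) = \<phi> (x \<otimes> inv x)" using injhomD(4)[OF assms(1) assms(4) ix] by simp
  also have "\<dots> = \<one>" using xc injhom_one[OF assms(1-3)] by simp
  finally have e: "\<phi> x \<otimes> \<phi> (inv x) = \<one>" .
  have c1: "\<phi> x \<in> carrier G" by (rule injhom_carrier[OF assms(1,3) assms(4)])
  have c2: "\<phi> (inv x) \<in> carrier G" by (rule injhom_carrier[OF assms(1,3) ix])
  have "\<phi> (inv x) \<otimes> \<phi> x = \<one>" by (rule inv_comm[OF e c1 c2])
  then show ?thesis using c1 c2 by (simp add: inv_equality)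
qed

lemma (in group) injhom_conj:
  assumes "injhom G P Q \<phi>" "subgroup P G" "subgroup Q G" "x \<in> P" "g \<in> P"
  shows "\<phi> (conjm G g x) = conjm G (\<phi> g) (\<phi> x)"
proof -
  have ig: "inv g \<in> P" using assms(2,5) by (rule subgroup.m_inv_closed)
  have m: "inv g \<otimes> x \<in> P" using assms(2) ig assms(4) by (rule subgroup.m_closed)
  have "\<phi> (inv g \<otimes> x \<otimes> g) = \<phi> (inv g \<otimes> x) \<otimes> \<phi> g" by (rule injhomD(4)[OF assms(1) m assms(5)])
  also have "\<phi> (inv g \<otimes> x) = \<phi> (inv g) \<otimes> \<phi> x" by (rule injhomD(4)[OF assms(1) ig assms(4)])
  also have "\<phi> (inv g) = inv (\<phi> g)" by (rule injhom_inv[OF assms(1-3) assms(5)])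
  finally show ?thesis unfolding conjm_def .
qed

lemma (in group) conjm_closed:
  "g \<in> carrier G \<Longrightarrow> x \<in> carrier G \<Longrightarrow> conjm G g x \<in> carrier G"
  unfolding conjm_def by simp

lemma (in group) conjm_one: "x \<in> carrier G \<Longrightarrow> conjm G \<one> x = x"
  unfolding conjm_def by simp

section \<open>Fusion system basics\<close>

context group begin

lemma fs_mor:
  assumes "fusion_system G Sx F" "(P, Q, \<phi>) \<in> F"
  shows "sgrp G Sx P" "sgrp G Sx Q" "injhom G P Q \<phi>"
  using assms unfolding fusion_system_def by fastforce+

lemma fs_comp:
  assumes "fusion_system G Sx F" "(P, Q, \<phi>) \<in> F" "(Q, R, \<psi>) \<in> F"
  shows "(P, R, compose P \<psi> \<phi>) \<in> F"
  using assms unfolding fusion_system_def by blast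

lemma fs_FS: "fusion_system G Sx F \<Longrightarrow> FS G Sx \<subseteq> F"
  unfolding fusion_system_def by blast

lemma fs_img:
  assumes "fusion_system G Sx F" "(P, Q, \<phi>) \<in> F"
  shows "(P, \<phi> ` P, \<phi>) \<in> F"
  using assms unfolding fusion_system_def by fastforce

lemma fs_inv:
  assumes "fusion_system G Sx F" "(P, Q, \<phi>) \<in> F"
  shows "(\<phi> ` P, P, restrict (inv_into P \<phi>) (\<phi> ` P)) \<in> F"
  using assms unfolding fusion_system_def by fastforce

lemma sgrp_carrier: "sgrp G Sx P \<Longrightarrow> P \<subseteq> carrier G"
  unfolding sgrp_def using subgroup.subset by blast

lemma fs_conj:
  assumes "fusion_system G Sx F" "s \<in> Sx" "sgrp G Sx P" "sgrp G Sx Q" "conjm G s ` P \<subseteq> Q"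
  shows "(P, Q, restrict (conjm G s) P) \<in> F"
proof -
  have "(P, Q, restrict (conjm G s) P) \<in> FS G Sx" unfolding FS_def using assms(2-5) by blast
  then show ?thesis using fs_FS[OF assms(1)] by blast
qed

lemma fs_incl:
  assumes "fusion_system G Sx F" "sgrp G Sx P" "sgrp G Sx Q" "P \<subseteq> Q"
  shows "(P, Q, restrict id P) \<in> F"
proof -
  have o: "\<one> \<in> Sx" using assms(2) unfolding sgrp_def using subgroup.one_closed by blast
  have c: "P \<subseteq> carrier G" using sgrp_carrier[OF assms(2)] .
  have e: "restrict (conjm G \<one>) P = restrict id P"
    using c by (auto simp: restrict_def conjm_one fun_eq_iff)
  have "conjm G \<one> ` P \<subseteq> Q" using c assms(4) by (auto simp: subset_iff conjm_one)
  then show ?thesis using fs_conj[OF assms(1) o assms(2,3)] e by simp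
qed

lemma fs_restr:
  assumes "fusion_system G Sx F" "(Q, R, \<phi>) \<in> F" "sgrp G Sx P" "P \<subseteq> Q"
  shows "(P, R, restrict \<phi> P) \<in> F"
proof -
  have "(P, Q, restrict id P) \<in> F" using fs_incl[OF assms(1,3) fs_mor(1)[OF assms(1,2)] assms(4)] .
  moreover have "compose P \<phi> (restrict id P) = restrict \<phi> P"
    by (auto simp: compose_def restrict_def fun_eq_iff)
  ultimately show ?thesis using fs_comp[OF assms(1) _ assms(2)] by metis
qed

lemma fs_target:
  assumes "fusion_system G Sx F" "(P, Q, \<phi>) \<in> F" "sgrp G Sx R" "\<phi> ` P \<subseteq> R"
  shows "(P, R, \<phi>) \<in> F"
proof -
  have i: "(P, \<phi> ` P, \<phi>) \<in> F" by (rule fs_img[OF assms(1,2)])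
  have "(\<phi> ` P, R, restrict id (\<phi> ` P)) \<in> F"
    by (rule fs_incl[OF assms(1) fs_mor(2)[OF assms(1) i] assms(3,4)])
  from fs_comp[OF assms(1) i this] have "(P, R, compose P (restrict id (\<phi> ` P)) \<phi>) \<in> F" .
  moreover have "compose P (restrict id (\<phi> ` P)) \<phi> = \<phi>"
    using injhomD(1)[OF fs_mor(3)[OF assms(1,2)]]
    by (auto simp: compose_def restrict_def fun_eq_iff extensional_def)
  ultimately show ?thesis by simp
qed

lemma fs_img_sgrp:
  assumes "fusion_system G Sx F" "(P, Q, \<phi>) \<in> F"
  shows "sgrp G Sx (\<phi> ` P)"
  using fs_mor(2)[OF assms(1) fs_img[OF assms]] .

lemma fs_img_sub:
  assumes "fusion_system G Sx F" "(P, Q, \<phi>) \<in> F"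
  shows "\<phi> ` P \<subseteq> Q"
  using injhomD(2)[OF fs_mor(3)[OF assms]] by blast

lemma fs_sub:
  assumes "fusion_system G Sx F" "sgrp G S Sx" "fusion_system G S F'" "F \<subseteq> F'"
    "(P, Q, \<phi>) \<in> F" "sgrp G S R" "\<phi> ` P \<subseteq> R"
  shows "(P, R, \<phi>) \<in> F'"
  using fs_target[OF assms(3) _ assms(6,7)] assms(4,5) by blast

end


section \<open>The completion is a fusion system\<close>

context group begin

lemma injhom_img_subgroup:
  assumes "injhom G P Q \<phi>" "subgroup P G" "subgroup Q G"
  shows "subgroup (\<phi> ` P) G"
proof (rule subgroupI)
  show "\<phi> ` P \<subseteq> carrier G" using injhom_carrier[OF assms(1,3)] by blast
  show "\<phi> ` P \<noteq> {}" using subgroup.one_closed[OF assms(2)] by blast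
  fix a b assume a: "a \<in> \<phi> ` P" and b: "b \<in> \<phi> ` P"
  then obtain x y where x: "x \<in> P" "a = \<phi> x" and y: "y \<in> P" "b = \<phi> y" by blast
  show "inv a \<in> \<phi> ` P"
    using x injhom_inv[OF assms x(1)] subgroup.m_inv_closed[OF assms(2) x(1)] by (metis image_eqI)
  show "a \<otimes> b \<in> \<phi> ` P"
    using x y injhomD(4)[OF assms(1) x(1) y(1)] subgroup.m_closed[OF assms(2) x(1) y(1)] by (metis image_eqI)
qed

lemma injhom_compose:
  assumes "injhom G P Q \<phi>" "injhom G Q R \<psi>" "subgroup P G"
  shows "injhom G P R (compose P \<psi> \<phi>)"
proof -
  have p: "\<phi> ` P \<subseteq> Q" using injhomD(2)[OF assms(1)] by blast
  show ?thesis unfolding injhom_def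
  proof (intro conjI ballI)
    show "compose P \<psi> \<phi> \<in> extensional P" by (rule compose_extensional)
    show "compose P \<psi> \<phi> \<in> P \<rightarrow> R" using injhomD(2)[OF assms(1)] injhomD(2)[OF assms(2)]
      by (rule funcset_compose)
    have "inj_on (\<psi> \<circ> \<phi>) P"
      using comp_inj_on[OF injhomD(3)[OF assms(1)] inj_on_subset[OF injhomD(3)[OF assms(2)] p]] .
    then show "inj_on (compose P \<psi> \<phi>) P"
      by (rule inj_on_cong[THEN iffD1, rotated]) (simp add: compose_def)
    fix x y assume x: "x \<in> P" and y: "y \<in> P"
    have xy: "x \<otimes> y \<in> P" using subgroup.m_closed[OF assms(3) x y] .
    have fx: "\<phi> x \<in> Q" "\<phi> y \<in> Q" using injhomD(2)[OF assms(1)] x y by auto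
    show "compose P \<psi> \<phi> (x \<otimes> y) = compose P \<psi> \<phi> x \<otimes> compose P \<psi> \<phi> y"
      using x y xy injhomD(4)[OF assms(1) x y] injhomD(4)[OF assms(2) fx] by (simp add: compose_def)
  qed
qed

lemma injhom_inverse:
  assumes "injhom G P Q \<phi>" "subgroup P G" "subgroup Q G"
  shows "injhom G (\<phi> ` P) P (restrict (inv_into P \<phi>) (\<phi> ` P))"
  unfolding injhom_def
proof (intro conjI ballI)
  have inj: "inj_on \<phi> P" by (rule injhomD(3)[OF assms(1)])
  show "restrict (inv_into P \<phi>) (\<phi> ` P) \<in> extensional (\<phi> ` P)" by simp
  show "restrict (inv_into P \<phi>) (\<phi> ` P) \<in> \<phi> ` P \<rightarrow> P" by (auto simp: inv_into_into)
  show "inj_on (restrict (inv_into P \<phi>) (\<phi> ` P)) (\<phi> ` P)"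
    using inj_on_inv_into[of "\<phi> ` P" \<phi> P] by (simp add: inj_on_def)
  fix a b assume a: "a \<in> \<phi> ` P" and b: "b \<in> \<phi> ` P"
  then obtain x y where x: "x \<in> P" "a = \<phi> x" and y: "y \<in> P" "b = \<phi> y" by blast
  have xy: "x \<otimes> y \<in> P" using subgroup.m_closed[OF assms(2) x(1) y(1)] .
  have ab: "a \<otimes> b = \<phi> (x \<otimes> y)" using x y injhomD(4)[OF assms(1) x(1) y(1)] by simp
  show "restrict (inv_into P \<phi>) (\<phi> ` P) (a \<otimes> b) =
        restrict (inv_into P \<phi>) (\<phi> ` P) a \<otimes> restrict (inv_into P \<phi>) (\<phi> ` P) b"
    using x y xy ab inj a b by (simp add: inv_into_f_f)
qed

lemma conj_injhom:
  assumes "g \<in> carrier G" "subgroup P G" "conjm G g ` P \<subseteq> Q"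
  shows "injhom G P Q (restrict (conjm G g) P)"
  unfolding injhom_def
proof (intro conjI ballI)
  have c: "P \<subseteq> carrier G" using subgroup.subset[OF assms(2)] .
  show "restrict (conjm G g) P \<in> extensional P" by simp
  show "restrict (conjm G g) P \<in> P \<rightarrow> Q" using assms(3) by auto
  show "inj_on (restrict (conjm G g) P) P"
  proof (rule inj_onI)
    fix x y assume "x \<in> P" "y \<in> P" "restrict (conjm G g) P x = restrict (conjm G g) P y"
    then show "x = y" using c assms(1) by (auto simp: conjm_def subset_iff)
  qed
  fix x y assume x: "x \<in> P" and y: "y \<in> P"
  have xc: "x \<in> carrier G" "y \<in> carrier G" using x y c by auto
  have "inv g \<otimes> x \<otimes> g \<otimes> (inv g \<otimes> y \<otimes> g) = inv g \<otimes> (x \<otimes> y) \<otimes> g"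
    using xc assms(1) by (simp add: m_assoc flip: m_assoc[of g "inv g"])
  then show "restrict (conjm G g) P (x \<otimes> y) = restrict (conjm G g) P x \<otimes> restrict (conjm G g) P y"
    using x y subgroup.m_closed[OF assms(2) x y] by (simp add: conjm_def)
qed

end


context group begin

definition Full :: "'a set \<Rightarrow> 'a fus" where
  "Full S = {(P, Q, \<phi>). sgrp G S P \<and> sgrp G S Q \<and> injhom G P Q \<phi>}"

lemma injhom_cod:
  assumes "injhom G P Q \<phi>" "\<phi> ` P \<subseteq> R" shows "injhom G P R \<phi>"
  using assms unfolding injhom_def by auto

lemma Full_fs:
  assumes "subgroup S G"
  shows "fusion_system G S (Full S)"
  unfolding fusion_system_def
proof (intro conjI)
  show "\<forall>(P, Q, \<phi>)\<in>Full S. sgrp G S P \<and> sgrp G S Q \<and> injhom G P Q \<phi>"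
    unfolding Full_def by blast
  show "FS G S \<subseteq> Full S"
  proof
    fix x assume "x \<in> FS G S"
    then obtain P Q \<phi> g where x: "x = (P, Q, \<phi>)" "sgrp G S P" "sgrp G S Q" "g \<in> S"
      "conjm G g ` P \<subseteq> Q" "\<phi> = restrict (conjm G g) P"
      unfolding FS_def by blast
    have "g \<in> carrier G" using x(4) subgroup.mem_carrier[OF assms] by blast
    then have "injhom G P Q \<phi>" using conj_injhom x(2,5,6) unfolding sgrp_def by blast
    then show "x \<in> Full S" using x unfolding Full_def by blast
  qed
  show "\<forall>P Q R \<phi> \<psi>. (P, Q, \<phi>) \<in> Full S \<and> (Q, R, \<psi>) \<in> Full S \<longrightarrow> (P, R, compose P \<psi> \<phi>) \<in> Full S"
    unfolding Full_def sgrp_def using injhom_compose by blast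
  show "\<forall>(P, Q, \<phi>)\<in>Full S. (P, \<phi> ` P, \<phi>) \<in> Full S \<and>
      (\<phi> ` P, P, restrict (inv_into P \<phi>) (\<phi> ` P)) \<in> Full S"
  proof (intro ballI, clarify)
    fix P Q \<phi> assume m: "(P, Q, \<phi>) \<in> Full S"
    then have a: "sgrp G S P" "sgrp G S Q" "injhom G P Q \<phi>" unfolding Full_def by auto
    have sub: "\<phi> ` P \<subseteq> Q" using injhomD(2)[OF a(3)] by blast
    have sg: "sgrp G S (\<phi> ` P)" using injhom_img_subgroup[OF a(3)] a sub unfolding sgrp_def by blast
    have h1: "injhom G P (\<phi> ` P) \<phi>" using injhom_cod[OF a(3)] by blast
    have h2: "injhom G (\<phi> ` P) P (restrict (inv_into P \<phi>) (\<phi> ` P))"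
      using injhom_inverse[OF a(3)] a unfolding sgrp_def by blast
    show "(P, \<phi> ` P, \<phi>) \<in> Full S \<and> (\<phi> ` P, P, restrict (inv_into P \<phi>) (\<phi> ` P)) \<in> Full S"
      using a sg h1 h2 unfolding Full_def by blast
  qed
qed

lemma fs_Inter:
  assumes "\<F> \<noteq> {}" "\<And>F. F \<in> \<F> \<Longrightarrow> fusion_system G S F"
  shows "fusion_system G S (\<Inter>\<F>)"
proof -
  obtain F0 where F0: "F0 \<in> \<F>" using assms(1) by blast
  show ?thesis unfolding fusion_system_def
  proof (intro conjI)
    show "\<forall>(P, Q, \<phi>)\<in>\<Inter>\<F>. sgrp G S P \<and> sgrp G S Q \<and> injhom G P Q \<phi>"
      using F0 fs_mor[OF assms(2)[OF F0]] by blast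
    show "FS G S \<subseteq> \<Inter>\<F>" using fs_FS assms(2) by blast
    show "\<forall>P Q R \<phi> \<psi>. (P, Q, \<phi>) \<in> \<Inter>\<F> \<and> (Q, R, \<psi>) \<in> \<Inter>\<F> \<longrightarrow> (P, R, compose P \<psi> \<phi>) \<in> \<Inter>\<F>"
      using fs_comp assms(2) by blast
    show "\<forall>(P, Q, \<phi>)\<in>\<Inter>\<F>. (P, \<phi> ` P, \<phi>) \<in> \<Inter>\<F> \<and>
      (\<phi> ` P, P, restrict (inv_into P \<phi>) (\<phi> ` P)) \<in> \<Inter>\<F>"
      using fs_img fs_inv assms(2) by blast
  qed
qed

lemma completion_fs:
  assumes "subgroup S G" "\<forall>v\<in>V. fusion_system G (Sv v) (Fv v) \<and> sgrp G S (Sv v)"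
  shows "fusion_system G S (completion G S V Fv)"
  unfolding completion_def
proof (rule fs_Inter)
  have "\<forall>v\<in>V. Fv v \<subseteq> Full S"
  proof (intro ballI subsetI)
    fix v x assume v: "v \<in> V" and x: "x \<in> Fv v"
    obtain P Q \<phi> where xe: "x = (P, Q, \<phi>)" by (cases x) auto
    have f: "fusion_system G (Sv v) (Fv v)" "sgrp G S (Sv v)" using assms(2) v by auto
    have m: "sgrp G (Sv v) P" "sgrp G (Sv v) Q" "injhom G P Q \<phi>" using fs_mor[OF f(1)] x xe by auto
    show "x \<in> Full S" using m f(2) xe unfolding Full_def sgrp_def by auto
  qed
  then show "{F. fusion_system G S F \<and> (\<forall>v\<in>V. Fv v \<subseteq> F)} \<noteq> {}"
    using Full_fs[OF assms(1)] by blast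
qed simp

lemma completion_sub: "v \<in> V \<Longrightarrow> Fv v \<subseteq> completion G S V Fv"
  unfolding completion_def by blast

end



locale clsctx = group G for G (structure) +
  fixes S FT Sx Fx
  assumes FT: "fusion_system G S FT" and Fx: "fusion_system G Sx Fx" and Sx: "sgrp G S Sx"
begin

lemma sgrp_Sx: "sgrp G Sx A \<Longrightarrow> sgrp G S A"
  using Sx unfolding sgrp_def by auto

lemma ext_of: "(P, Q, \<alpha>) \<in> FT \<Longrightarrow> \<alpha> \<in> extensional P"
  using injhomD(1)[OF fs_mor(3)[OF FT]] by blast

lemma img_Sx:
  assumes "(P, Sx, \<alpha>) \<in> FT" shows "sgrp G Sx (\<alpha> ` P)"
  using fs_img_sgrp[OF FT assms] fs_img_sub[OF FT assms] unfolding sgrp_def by blast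

lemma clsD:
  assumes "\<beta> \<in> cls FT Fx P Sx \<alpha>"
  obtains \<gamma> where "(P, Sx, \<beta>) \<in> FT" "(\<alpha> ` P, \<beta> ` P, \<gamma>) \<in> Fx" "bij_betw \<gamma> (\<alpha> ` P) (\<beta> ` P)"
    "\<beta> = compose P \<gamma> \<alpha>"
  using assms unfolding cls_def by blast

lemma clsI:
  assumes "(P, Sx, \<beta>) \<in> FT" "(\<alpha> ` P, \<beta> ` P, \<gamma>) \<in> Fx" "bij_betw \<gamma> (\<alpha> ` P) (\<beta> ` P)"
    "\<beta> = compose P \<gamma> \<alpha>"
  shows "\<beta> \<in> cls FT Fx P Sx \<alpha>"
  using assms unfolding cls_def by blast

lemma cls_refl:
  assumes a: "(P, Sx, \<alpha>) \<in> FT" shows "\<alpha> \<in> cls FT Fx P Sx \<alpha>"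
proof (rule clsI[OF a])
  have s: "sgrp G Sx (\<alpha> ` P)" by (rule img_Sx[OF a])
  show "(\<alpha> ` P, \<alpha> ` P, restrict id (\<alpha> ` P)) \<in> Fx" using fs_incl[OF Fx s s] by simp
  show "bij_betw (restrict id (\<alpha> ` P)) (\<alpha> ` P) (\<alpha> ` P)"
    by (simp add: bij_betw_def inj_on_def)
  show "\<alpha> = compose P (restrict id (\<alpha> ` P)) \<alpha>"
    using ext_of[OF a] by (auto simp: compose_def fun_eq_iff extensional_def)
qed

lemma cls_sym:
  assumes a: "(P, Sx, \<alpha>) \<in> FT" and b: "\<beta> \<in> cls FT Fx P Sx \<alpha>"
  shows "\<alpha> \<in> cls FT Fx P Sx \<beta>"
proof -
  obtain \<gamma> where g: "(P, Sx, \<beta>) \<in> FT" "(\<alpha> ` P, \<beta> ` P, \<gamma>) \<in> Fx" "bij_betw \<gamma> (\<alpha> ` P) (\<beta> ` P)"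
    "\<beta> = compose P \<gamma> \<alpha>" using clsD[OF b] by blast
  have im: "\<gamma> ` (\<alpha> ` P) = \<beta> ` P" using g(3) by (simp add: bij_betw_def)
  have inj: "inj_on \<gamma> (\<alpha> ` P)" using g(3) by (simp add: bij_betw_def)
  let ?g = "restrict (inv_into (\<alpha> ` P) \<gamma>) (\<beta> ` P)"
  show ?thesis
  proof (rule clsI[OF a])
    show "(\<beta> ` P, \<alpha> ` P, ?g) \<in> Fx" using fs_inv[OF Fx g(2)] im by simp
    show "bij_betw ?g (\<beta> ` P) (\<alpha> ` P)"
      using bij_betw_inv_into[OF g(3)] by (rule bij_betw_cong[THEN iffD1, rotated]) simp
    show "\<alpha> = compose P ?g \<beta>"
    proof (rule ext)
      fix x show "\<alpha> x = compose P ?g \<beta> x"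
      proof (cases "x \<in> P")
        case True
        then have "\<beta> x = \<gamma> (\<alpha> x)" using g(4) by (simp add: compose_def)
        moreover have "\<beta> x \<in> \<beta> ` P" using True by blast
        ultimately show ?thesis using True inj by (simp add: compose_def inv_into_f_f)
      next
        case False then show ?thesis using ext_of[OF a] by (simp add: compose_def extensional_def)
      qed
    qed
  qed
qed

lemma cls_trans:
  assumes b: "\<beta> \<in> cls FT Fx P Sx \<alpha>" and d: "\<delta> \<in> cls FT Fx P Sx \<beta>"
  shows "\<delta> \<in> cls FT Fx P Sx \<alpha>"
proof -
  obtain \<gamma> where g: "(P, Sx, \<beta>) \<in> FT" "(\<alpha> ` P, \<beta> ` P, \<gamma>) \<in> Fx" "bij_betw \<gamma> (\<alpha> ` P) (\<beta> ` P)"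
    "\<beta> = compose P \<gamma> \<alpha>" using clsD[OF b] by blast
  obtain \<gamma>' where g': "(P, Sx, \<delta>) \<in> FT" "(\<beta> ` P, \<delta> ` P, \<gamma>') \<in> Fx" "bij_betw \<gamma>' (\<beta> ` P) (\<delta> ` P)"
    "\<delta> = compose P \<gamma>' \<beta>" using clsD[OF d] by blast
  show ?thesis
  proof (rule clsI[OF g'(1)])
    show "(\<alpha> ` P, \<delta> ` P, compose (\<alpha> ` P) \<gamma>' \<gamma>) \<in> Fx" by (rule fs_comp[OF Fx g(2) g'(2)])
    have "bij_betw (\<gamma>' \<circ> \<gamma>) (\<alpha> ` P) (\<delta> ` P)" using g(3) g'(3) by (rule bij_betw_trans)
    then show "bij_betw (compose (\<alpha> ` P) \<gamma>' \<gamma>) (\<alpha> ` P) (\<delta> ` P)"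
      by (rule bij_betw_cong[THEN iffD1, rotated]) (simp add: compose_def)
    show "\<delta> = compose P (compose (\<alpha> ` P) \<gamma>' \<gamma>) \<alpha>"
      using g(4) g'(4) by (auto simp: compose_def fun_eq_iff)
  qed
qed

lemma cls_eq:
  assumes a: "(P, Sx, \<alpha>) \<in> FT" and b: "\<beta> \<in> cls FT Fx P Sx \<alpha>"
  shows "cls FT Fx P Sx \<beta> = cls FT Fx P Sx \<alpha>"
  using cls_trans[OF b] cls_trans[OF cls_sym[OF a b]] by blast

lemma cls_some:
  assumes a: "(P, Sx, \<alpha>) \<in> FT"
  shows "(SOME \<phi>. \<phi> \<in> cls FT Fx P Sx \<alpha>) \<in> cls FT Fx P Sx \<alpha>"
    "cls FT Fx P Sx (SOME \<phi>. \<phi> \<in> cls FT Fx P Sx \<alpha>) = cls FT Fx P Sx \<alpha>"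
proof -
  show s: "(SOME \<phi>. \<phi> \<in> cls FT Fx P Sx \<alpha>) \<in> cls FT Fx P Sx \<alpha>"
    using cls_refl[OF a] by (rule someI[where x=\<alpha>])
  show "cls FT Fx P Sx (SOME \<phi>. \<phi> \<in> cls FT Fx P Sx \<alpha>) = cls FT Fx P Sx \<alpha>"
    by (rule cls_eq[OF a s])
qed

lemma cls_memFT: "\<beta> \<in> cls FT Fx P Sx \<alpha> \<Longrightarrow> (P, Sx, \<beta>) \<in> FT"
  unfolding cls_def by blast

lemma cls_eq_iff:
  assumes a: "(P, Sx, \<alpha>) \<in> FT" and b: "(P, Sx, \<beta>) \<in> FT"
  shows "cls FT Fx P Sx \<beta> = cls FT Fx P Sx \<alpha> \<longleftrightarrow> \<beta> \<in> cls FT Fx P Sx \<alpha>"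
  using cls_eq[OF a] cls_refl[OF b] by blast

lemma cls_act:
  assumes b: "\<beta> \<in> cls FT Fx P Sx \<alpha>" and psi: "(P, P, \<psi>) \<in> FT" "\<psi> ` P = P"
  shows "compose P \<beta> \<psi> \<in> cls FT Fx P Sx (compose P \<alpha> \<psi>)"
proof -
  obtain \<gamma> where g: "(P, Sx, \<beta>) \<in> FT" "(\<alpha> ` P, \<beta> ` P, \<gamma>) \<in> Fx" "bij_betw \<gamma> (\<alpha> ` P) (\<beta> ` P)"
    "\<beta> = compose P \<gamma> \<alpha>" using clsD[OF b] by blast
  have "compose P \<beta> \<psi> ` P = (\<beta> \<circ> \<psi>) ` P" by (rule image_cong) (simp_all add: compose_def)
  then have i1: "compose P \<beta> \<psi> ` P = \<beta> ` P" using psi(2) by (metis image_comp)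
  have "compose P \<alpha> \<psi> ` P = (\<alpha> \<circ> \<psi>) ` P" by (rule image_cong) (simp_all add: compose_def)
  then have i2: "compose P \<alpha> \<psi> ` P = \<alpha> ` P" using psi(2) by (metis image_comp)
  show ?thesis
  proof (rule clsI)
    show "(P, Sx, compose P \<beta> \<psi>) \<in> FT" by (rule fs_comp[OF FT psi(1) g(1)])
    show "(compose P \<alpha> \<psi> ` P, compose P \<beta> \<psi> ` P, \<gamma>) \<in> Fx" using g(2) i1 i2 by simp
    show "bij_betw \<gamma> (compose P \<alpha> \<psi> ` P) (compose P \<beta> \<psi> ` P)" using g(3) i1 i2 by simp
    show "compose P \<beta> \<psi> = compose P \<gamma> (compose P \<alpha> \<psi>)"
      using g(4) psi(2) by (auto simp: compose_def fun_eq_iff)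
  qed
qed


lemma cls_res:
  assumes a: "(Q, Sx, \<alpha>) \<in> FT" and b: "\<beta> \<in> cls FT Fx Q Sx \<alpha>" and P: "sgrp G S P" "P \<subseteq> Q"
  shows "restrict \<beta> P \<in> cls FT Fx P Sx (restrict \<alpha> P)"
proof -
  obtain \<gamma> where g: "(Q, Sx, \<beta>) \<in> FT" "(\<alpha> ` Q, \<beta> ` Q, \<gamma>) \<in> Fx" "bij_betw \<gamma> (\<alpha> ` Q) (\<beta> ` Q)"
    "\<beta> = compose Q \<gamma> \<alpha>" using clsD[OF b] by blast
  have ra: "(P, Sx, restrict \<alpha> P) \<in> FT" by (rule fs_restr[OF FT a P])
  have rb: "(P, Sx, restrict \<beta> P) \<in> FT" by (rule fs_restr[OF FT g(1) P])
  have ia: "restrict \<alpha> P ` P = \<alpha> ` P" by simp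
  have ib: "restrict \<beta> P ` P = \<beta> ` P" by simp
  have sa: "sgrp G Sx (\<alpha> ` P)" using img_Sx[OF ra] by simp
  have sb: "sgrp G Sx (\<beta> ` P)" using img_Sx[OF rb] by simp
  have bx: "\<And>x. x \<in> P \<Longrightarrow> \<beta> x = \<gamma> (\<alpha> x)" using g(4) P(2) by (auto simp: compose_def)
  have "(\<gamma> \<circ> \<alpha>) ` P = \<beta> ` P" by (rule image_cong) (simp_all add: bx)
  then have imgg: "restrict \<gamma> (\<alpha> ` P) ` (\<alpha> ` P) = \<beta> ` P"
    by (simp add: image_comp)
  have r1: "(\<alpha> ` P, \<beta> ` Q, restrict \<gamma> (\<alpha> ` P)) \<in> Fx"
    by (rule fs_restr[OF Fx g(2) sa]) (use P(2) in blast)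
  have r2: "(\<alpha> ` P, \<beta> ` P, restrict \<gamma> (\<alpha> ` P)) \<in> Fx"
    by (rule fs_target[OF Fx r1 sb]) (rule equalityD1[OF imgg])
  show ?thesis
  proof (rule clsI[OF rb])
    show "(restrict \<alpha> P ` P, restrict \<beta> P ` P, restrict \<gamma> (\<alpha> ` P)) \<in> Fx" using r2 by simp
    have "inj_on \<gamma> (\<alpha> ` P)" using g(3) P(2) unfolding bij_betw_def by (meson image_mono inj_on_subset)
    then have "bij_betw (restrict \<gamma> (\<alpha> ` P)) (\<alpha> ` P) (\<beta> ` P)"
      using imgg by (simp add: bij_betw_def inj_on_def)
    then show "bij_betw (restrict \<gamma> (\<alpha> ` P)) (restrict \<alpha> P ` P) (restrict \<beta> P ` P)" by simp
    show "restrict \<beta> P = compose P (restrict \<gamma> (\<alpha> ` P)) (restrict \<alpha> P)"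
      using bx by (auto simp: compose_def fun_eq_iff)
  qed
qed

lemma cls_img_fixed:
  assumes a: "(Q, Sx, \<alpha>) \<in> FT" and FSx: "FS G Sx \<subseteq> Fx" and P: "sgrp G S P" "P \<subseteq> Q"
    and g: "g \<in> Q" and n: "conjm G g ` P = P"
  shows "compose P (restrict \<alpha> P) (restrict (conjm G g) P) \<in> cls FT Fx P Sx (restrict \<alpha> P)"
proof -
  have ra: "(P, Sx, restrict \<alpha> P) \<in> FT" by (rule fs_restr[OF FT a P])
  have Q: "sgrp G S Q" using fs_mor(1)[OF FT a] .
  have hom: "injhom G Q Sx \<alpha>" using fs_mor(3)[OF FT a] .
  have sQ: "subgroup Q G" "subgroup Sx G" using Q Sx unfolding sgrp_def by auto
  have ag: "\<alpha> g \<in> Sx" using injhom_carrier(2)[OF hom sQ(2) g] .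
  have cj: "\<And>x. x \<in> P \<Longrightarrow> \<alpha> (conjm G g x) = conjm G (\<alpha> g) (\<alpha> x)"
    using injhom_conj[OF hom sQ] P(2) g by blast
  have imgc: "conjm G (\<alpha> g) ` (\<alpha> ` P) = \<alpha> ` P"
  proof -
    have "(conjm G (\<alpha> g) \<circ> \<alpha>) ` P = (\<alpha> \<circ> conjm G g) ` P"
      by (rule image_cong) (simp_all add: cj)
    then have "conjm G (\<alpha> g) ` (\<alpha> ` P) = \<alpha> ` (conjm G g ` P)"
      by (simp add: image_comp)
    then show ?thesis using n by simp
  qed
  have sa: "sgrp G Sx (\<alpha> ` P)" using img_Sx[OF ra] by simp
  have c: "(\<alpha> ` P, \<alpha> ` P, restrict (conjm G (\<alpha> g)) (\<alpha> ` P)) \<in> Fx"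
    using fs_conj[OF Fx ag sa sa] imgc by simp
  have comp_eq: "compose P (restrict \<alpha> P) (restrict (conjm G g) P) =
      compose P (restrict (conjm G (\<alpha> g)) (\<alpha> ` P)) (restrict \<alpha> P)"
  proof (rule ext)
    fix x show "compose P (restrict \<alpha> P) (restrict (conjm G g) P) x =
      compose P (restrict (conjm G (\<alpha> g)) (\<alpha> ` P)) (restrict \<alpha> P) x"
    proof (cases "x \<in> P")
      case True
      then have "conjm G g x \<in> P" using n by blast
      then show ?thesis using True cj by (simp add: compose_def)
    qed (simp add: compose_def)
  qed
  have psi: "(P, P, restrict (conjm G g) P) \<in> FT"
    using fs_conj[OF FT _ P(1) P(1)] n g Q P unfolding sgrp_def by auto
  have img1: "compose P (restrict \<alpha> P) (restrict (conjm G g) P) ` P = \<alpha> ` P"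
  proof -
    have "compose P (restrict \<alpha> P) (restrict (conjm G g) P) ` P = (\<alpha> \<circ> conjm G g) ` P"
    proof (rule image_cong)
      fix x assume x: "x \<in> P"
      then have "conjm G g x \<in> P" using n by blast
      then show "compose P (restrict \<alpha> P) (restrict (conjm G g) P) x = (\<alpha> \<circ> conjm G g) x"
        using x by (simp add: compose_def)
    qed simp
    then have "compose P (restrict \<alpha> P) (restrict (conjm G g) P) ` P = \<alpha> ` (conjm G g ` P)"
      by (simp add: image_comp)
    then show ?thesis using n by simp
  qed
  show ?thesis
  proof (rule clsI)
    show "(P, Sx, compose P (restrict \<alpha> P) (restrict (conjm G g) P)) \<in> FT"
      by (rule fs_comp[OF FT psi ra])
    show "(restrict \<alpha> P ` P, compose P (restrict \<alpha> P) (restrict (conjm G g) P) ` P,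
        restrict (conjm G (\<alpha> g)) (\<alpha> ` P)) \<in> Fx" using c img1 by simp
    have "inj_on (restrict (conjm G (\<alpha> g)) (\<alpha> ` P)) (\<alpha> ` P)"
      using injhomD(3)[OF fs_mor(3)[OF Fx c]] .
    then show "bij_betw (restrict (conjm G (\<alpha> g)) (\<alpha> ` P)) (restrict \<alpha> P ` P)
        (compose P (restrict \<alpha> P) (restrict (conjm G g) P) ` P)"
      using imgc img1 by (simp add: bij_betw_def)
    show "compose P (restrict \<alpha> P) (restrict (conjm G g) P) =
      compose P (restrict (conjm G (\<alpha> g)) (\<alpha> ` P)) (restrict \<alpha> P)" by (rule comp_eq)
  qed
qed

lemma cls_FS_conj:
  assumes "compose P \<gamma> \<psi> \<in> cls FT (FS G Sx) P Sx \<gamma>"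
  shows "\<exists>s\<in>Sx. \<forall>x\<in>P. \<gamma> (\<psi> x) = conjm G s (\<gamma> x)"
proof -
  obtain c where c: "(\<gamma> ` P, compose P \<gamma> \<psi> ` P, c) \<in> FS G Sx"
    "compose P \<gamma> \<psi> = compose P c \<gamma>"
    using assms unfolding cls_def by blast
  obtain s where s: "s \<in> Sx" "c = restrict (conjm G s) (\<gamma> ` P)" using c(1) unfolding FS_def by blast
  have "\<forall>x\<in>P. \<gamma> (\<psi> x) = conjm G s (\<gamma> x)"
  proof
    fix x assume x: "x \<in> P"
    have "compose P \<gamma> \<psi> x = compose P c \<gamma> x" using c(2) by simp
    then show "\<gamma> (\<psi> x) = conjm G s (\<gamma> x)" using x s(2) by (simp add: compose_def)
  qed
  then show ?thesis using s(1) by blast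
qed

end

lemma cls_mono:
  assumes "Fx \<subseteq> Fy" "\<beta> \<in> cls FT Fx P Sx \<alpha>" "fusion_system G S FT" "sgrp G S Sy" "Sx \<subseteq> Sy"
    "group G"
  shows "\<beta> \<in> cls FT Fy P Sy \<alpha>"
proof -
  have "(P, Sx, \<beta>) \<in> FT" using assms(2) unfolding cls_def by blast
  then have "(P, Sy, \<beta>) \<in> FT"
    using group.fs_target[OF assms(6,3) _ assms(4)] group.fs_img_sub[OF assms(6,3)] assms(5) by blast
  then show ?thesis using assms(1,2) unfolding cls_def by blast
qed



lemma upathD:
  assumes "upath V E ends vs es"
  shows "vs \<noteq> []" "length vs = Suc (length es)" "distinct vs" "set vs \<subseteq> V" "set es \<subseteq> E"
    "\<And>i. i < length es \<Longrightarrow> ends (es ! i) = {vs ! i, vs ! Suc i}"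
  using assms unfolding upath_def by auto

lemma upath_edges_distinct:
  assumes p: "upath V E ends vs es" shows "distinct es"
proof (rule distinct_conv_nth[THEN iffD2], intro allI impI)
  note d = upathD[OF p]
  fix i j assume i: "i < length es" and j: "j < length es" and ij: "i \<noteq> j"
  show "es ! i \<noteq> es ! j"
  proof
    assume eq: "es ! i = es ! j"
    have "{vs ! i, vs ! Suc i} = ends (es ! i)" using d(6)[OF i] by simp
    also have "\<dots> = ends (es ! j)" using eq by simp
    also have "\<dots> = {vs ! j, vs ! Suc j}" using d(6)[OF j] by simp
    finally have se: "{vs ! i, vs ! Suc i} = {vs ! j, vs ! Suc j}" .
    have "vs ! i \<in> {vs ! i, vs ! Suc i}" by simp
    then have "vs ! i \<in> {vs ! j, vs ! Suc j}" by (simp only: se)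
    then have m1: "vs ! i = vs ! j \<or> vs ! i = vs ! Suc j" by simp
    have "vs ! j \<in> {vs ! j, vs ! Suc j}" by simp
    then have "vs ! j \<in> {vs ! i, vs ! Suc i}" by (simp only: se)
    then have m2: "vs ! j = vs ! i \<or> vs ! j = vs ! Suc i" by simp
    note m = m1 m2
    have b: "i < length vs" "j < length vs" "Suc i < length vs" "Suc j < length vs" using d(2) i j by auto
    have e1: "i = j \<or> i = Suc j"
      using m(1) nth_eq_iff_index_eq[OF d(3) b(1) b(2)] nth_eq_iff_index_eq[OF d(3) b(1) b(4)] by auto
    have e2: "j = i \<or> j = Suc i"
      using m(2) nth_eq_iff_index_eq[OF d(3) b(2) b(1)] nth_eq_iff_index_eq[OF d(3) b(2) b(3)] by auto
    show False using e1 e2 ij by linarith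
  qed
qed

lemma upath_tl:
  assumes p: "upath V E ends vs es" and ne: "es \<noteq> []"
  shows "upath V E ends (tl vs) (tl es)"
proof -
  note d = upathD[OF p]
  obtain a r where vs: "vs = a # r" using d(1) by (cases vs) auto
  obtain e es' where es: "es = e # es'" using ne by (cases es) auto
  show ?thesis unfolding upath_def
  proof (intro conjI allI impI)
    show "tl vs \<noteq> []" using d(2) vs es by (cases r) auto
    show "length (tl vs) = Suc (length (tl es))" using d(2) vs es by simp
    show "distinct (tl vs)" using d(3) vs by simp
    show "set (tl vs) \<subseteq> V" using d(4) vs by auto
    show "set (tl es) \<subseteq> E" using d(5) es by auto
    fix i assume "i < length (tl es)"
    then show "ends (tl es ! i) = {tl vs ! i, tl vs ! Suc i}"
      using d(6)[of "Suc i"] vs es by simp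
  qed
qed

lemma upath_take:
  assumes p: "upath V E ends vs es" and n: "n < length vs"
  shows "upath V E ends (take (Suc n) vs) (take n es)"
proof -
  note d = upathD[OF p]
  show ?thesis unfolding upath_def
  proof (intro conjI allI impI)
    show "take (Suc n) vs \<noteq> []" using d(1) by simp
    show "length (take (Suc n) vs) = Suc (length (take n es))" using d(2) n by simp
    show "distinct (take (Suc n) vs)" using d(3) by simp
    show "set (take (Suc n) vs) \<subseteq> V" using d(4) set_take_subset by fast
    show "set (take n es) \<subseteq> E" using d(5) set_take_subset by fast
    fix i assume "i < length (take n es)"
    then show "ends (take n es ! i) = {take (Suc n) vs ! i, take (Suc n) vs ! Suc i}"
      using d(6)[of i] by simp
  qed
qed

lemma upath_rev:
  assumes p: "upath V E ends vs es"
  shows "upath V E ends (rev vs) (rev es)"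
proof -
  note d = upathD[OF p]
  show ?thesis unfolding upath_def
  proof (intro conjI allI impI)
    show "rev vs \<noteq> []" using d(1) by simp
    show "length (rev vs) = Suc (length (rev es))" using d(2) by simp
    show "distinct (rev vs)" using d(3) by simp
    show "set (rev vs) \<subseteq> V" using d(4) by simp
    show "set (rev es) \<subseteq> E" using d(5) by simp
    fix i assume i: "i < length (rev es)"
    let ?n = "length es"
    have "rev es ! i = es ! (?n - Suc i)" using i by (simp add: rev_nth)
    moreover have "rev vs ! i = vs ! (Suc (?n - Suc i))" using i d(2) by (simp add: rev_nth Suc_diff_Suc)
    moreover have "rev vs ! Suc i = vs ! (?n - Suc i)" using i d(2) by (simp add: rev_nth)
    moreover have "ends (es ! (?n - Suc i)) = {vs ! (?n - Suc i), vs ! Suc (?n - Suc i)}"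
      using d(6) i by simp
    ultimately show "ends (rev es ! i) = {rev vs ! i, rev vs ! Suc i}" by auto
  qed
qed

lemma append_tl_nth:
  assumes "xs \<noteq> []" "ys \<noteq> []" "last xs = hd ys" "k < length ys"
  shows "(xs @ tl ys) ! (length xs - 1 + k) = ys ! k"
proof (cases k)
  case 0
  then show ?thesis using assms by (simp add: nth_append last_conv_nth hd_conv_nth)
next
  case (Suc k')
  have "length xs - 1 + k \<ge> length xs" using Suc assms(1) by (cases xs) auto
  then have "(xs @ tl ys) ! (length xs - 1 + k) = tl ys ! (length xs - 1 + k - length xs)"
    by (simp add: nth_append)
  also have "length xs - 1 + k - length xs = k'" using Suc assms(1) by (cases xs) auto
  finally show ?thesis using Suc assms by (simp add: nth_tl)
qed

lemma upath_append:
  assumes p1: "upath V E ends vs1 es1" and p2: "upath V E ends vs2 es2"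
    and l: "last vs1 = hd vs2" and dj: "set vs1 \<inter> set (tl vs2) = {}"
  shows "upath V E ends (vs1 @ tl vs2) (es1 @ es2)"
proof -
  note d1 = upathD[OF p1] and d2 = upathD[OF p2]
  show ?thesis unfolding upath_def
  proof (intro conjI allI impI)
    show "vs1 @ tl vs2 \<noteq> []" using d1(1) by simp
    show "length (vs1 @ tl vs2) = Suc (length (es1 @ es2))" using d1(2) d2(2) by simp
    show "distinct (vs1 @ tl vs2)" using d1(3) d2(3) dj by (simp add: distinct_tl)
    show "set (vs1 @ tl vs2) \<subseteq> V" using d1(4) d2(4) list.set_sel(2)[of vs2] by (cases vs2) auto
    show "set (es1 @ es2) \<subseteq> E" using d1(5) d2(5) by simp
    fix i assume i: "i < length (es1 @ es2)"
    show "ends ((es1 @ es2) ! i) = {(vs1 @ tl vs2) ! i, (vs1 @ tl vs2) ! Suc i}"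
    proof (cases "i < length es1")
      case True
      then show ?thesis using d1(6)[OF True] d1(2) by (simp add: nth_append)
    next
      case False
      define k where "k = i - length es1"
      have k: "k < length es2" "i = length vs1 - 1 + k" using i False d1(2) unfolding k_def by auto
      have "(es1 @ es2) ! i = es2 ! k" using False by (simp add: nth_append k_def)
      moreover have "(vs1 @ tl vs2) ! i = vs2 ! k"
        using append_tl_nth[OF d1(1) d2(1) l, of k] k d2(2) by simp
      moreover have "(vs1 @ tl vs2) ! Suc i = vs2 ! Suc k"
        using append_tl_nth[OF d1(1) d2(1) l, of "Suc k"] k d2(2) d1(1)
        by (simp add: Suc_diff_Suc)
      ultimately show ?thesis using d2(6)[OF k(1)] by simp
    qed
  qed
qed


lemma nth_notin_take:
  assumes "distinct xs" "i < length xs" shows "xs ! i \<notin> set (take i xs)"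
proof -
  have "xs ! i \<in> set (drop i xs)" using assms(2) by (simp add: in_set_conv_nth) (rule exI[of _ 0], simp)
  then show ?thesis using set_take_disj_set_drop_if_distinct[OF assms(1), of i i] by blast
qed

lemma last_take_Suc: "n < length xs \<Longrightarrow> last (take (Suc n) xs) = xs ! n"
  by (simp add: take_Suc_conv_app_nth)

lemma last_append_tl:
  assumes "xs \<noteq> []" "ys \<noteq> []" "last xs = hd ys"
  shows "last (xs @ tl ys) = last ys"
  using assms by (cases ys) auto

lemma diverge_cycle:
  assumes p: "upath V E ends (a # b # r) (e # er)" and p': "upath V E ends (a # b' # r') (e' # er')"
    and l: "last (b # r) = last (b' # r')" and ne: "e \<noteq> e'"
  shows "\<exists>C CE c. ucycle V E ends C CE c"
proof -
  define vs where "vs = a # b # r"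
  define es where "es = e # er"
  define vs' where "vs' = a # b' # r'"
  define es' where "es' = e' # er'"
  have p1: "upath V E ends vs es" using p unfolding vs_def es_def .
  have p2: "upath V E ends vs' es'" using p' unfolding vs'_def es'_def .
  note d = upathD[OF p1] and d' = upathD[OF p2]
  let ?P = "\<lambda>j. j < length vs' \<and> vs' ! j \<in> set (tl vs)"
  have "?P (length vs' - 1)"
  proof -
    have "vs' ! (length vs' - 1) = last vs'" using d'(1) by (simp add: last_conv_nth)
    also have "\<dots> = last (b # r)" using l unfolding vs'_def by simp
    finally show ?thesis unfolding vs_def vs'_def by simp
  qed
  then obtain j where j: "?P j" and jmin: "\<And>k. k < j \<Longrightarrow> \<not> ?P k"
    using exists_least_iff[of ?P] by blast
  have anot: "a \<notin> set (tl vs)" using d(3) unfolding vs_def by simp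
  have j1: "j \<ge> 1"
  proof (rule ccontr)
    assume "\<not> j \<ge> 1" then have "j = 0" by simp
    then show False using j anot unfolding vs'_def by simp
  qed
  obtain i' where i': "i' < length (tl vs)" "tl vs ! i' = vs' ! j" using j by (metis in_set_conv_nth)
  have ptl: "upath V E ends (tl vs) (tl es)" using upath_tl[OF p1] unfolding es_def by simp
  define C1 where "C1 = take (Suc j) vs'"
  define E1 where "E1 = take j es'"
  define P2 where "P2 = take (Suc i') (tl vs)"
  define E2 where "E2 = take i' (tl es)"
  have pc1: "upath V E ends C1 E1" unfolding C1_def E1_def using upath_take[OF p2] j by blast
  have pc2': "upath V E ends P2 E2" unfolding P2_def E2_def using upath_take[OF ptl i'(1)] .
  have pc2: "upath V E ends (rev P2) (rev E2)" using upath_rev[OF pc2'] .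
  have lC1: "last C1 = vs' ! j"
  proof -
    have "take (Suc j) vs' \<noteq> []" using j by (cases vs') auto
    then have "last (take (Suc j) vs') = take (Suc j) vs' ! (length (take (Suc j) vs') - 1)"
      by (rule last_conv_nth)
    moreover have "length (take (Suc j) vs') - 1 = j" using j by simp
    ultimately show ?thesis unfolding C1_def using j by simp
  qed
  have hC2: "hd (rev P2) = vs' ! j" unfolding P2_def using i' by (simp add: hd_rev last_take_Suc)
  have tlC2: "set (tl (rev P2)) \<subseteq> set (take i' (tl vs))"
  proof -
    have "tl (rev P2) = rev (butlast P2)" by (metis butlast_rev rev_rev_ident)
    moreover have "butlast P2 = take i' (tl vs)" unfolding P2_def using i'
      by (simp add: butlast_take)
    ultimately show ?thesis by simp
  qed
  have dtl: "distinct (tl vs)" using d(3) by (simp add: distinct_tl)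
  have dj: "set C1 \<inter> set (tl (rev P2)) = {}"
  proof (rule ccontr)
    assume "set C1 \<inter> set (tl (rev P2)) \<noteq> {}"
    then obtain x where x1: "x \<in> set C1" and x2: "x \<in> set (take i' (tl vs))" using tlC2 by blast
    obtain k where k: "k < length C1" "C1 ! k = x" using x1 by (metis in_set_conv_nth)
    have kj: "k \<le> j" "k < length vs'" using k(1) j unfolding C1_def by auto
    have xk: "x = vs' ! k" using k kj unfolding C1_def by simp
    have "x \<in> set (tl vs)" using x2 set_take_subset by fast
    then have "?P k" using kj xk by simp
    then have "k = j" using jmin kj by (meson le_neq_implies_less)
    then have "x = tl vs ! i'" using xk i' by simp
    then show False using x2 nth_notin_take[OF dtl i'(1)] by simp
  qed
  define Cy where "Cy = C1 @ tl (rev P2)"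
  define CE where "CE = E1 @ rev E2"
  have pc: "upath V E ends Cy CE" unfolding Cy_def CE_def
    using upath_append[OF pc1 pc2 _ dj] lC1 hC2 by simp
  have len: "2 \<le> length Cy" unfolding Cy_def C1_def using j j1 by simp
  have eE: "e \<in> E" using d(5) unfolding es_def by simp
  have ends_e: "ends e = {a, b}" using d(6)[of 0] unfolding es_def vs_def by simp
  have dE: "distinct es" using upath_edges_distinct[OF p1] .
  have eE2: "e \<notin> set (rev E2)"
  proof -
    have "set E2 \<subseteq> set er" unfolding E2_def es_def using set_take_subset by fastforce
    moreover have "e \<notin> set er" using dE unfolding es_def by simp
    ultimately show ?thesis by auto
  qed
  have eE1: "e \<notin> set E1"
  proof
    assume "e \<in> set E1"
    then obtain k where k: "k < length E1" "E1 ! k = e" by (metis in_set_conv_nth)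
    have kj: "k < j" "k < length es'" using k(1) unfolding E1_def by auto
    have ek: "es' ! k = e" using k kj unfolding E1_def by simp
    have "ends (es' ! k) = {vs' ! k, vs' ! Suc k}" using d'(6)[OF kj(2)] .
    then have se: "{vs' ! k, vs' ! Suc k} = {a, b}" using ek ends_e by simp
    have bsk: "Suc k < length vs'" using kj(2) d'(2) by simp
    have "vs' ! Suc k \<noteq> vs' ! 0"
      using nth_eq_iff_index_eq[OF d'(3) bsk] d'(1) by simp
    then have "vs' ! Suc k \<noteq> a" unfolding vs'_def by simp
    moreover have "vs' ! Suc k \<in> {a, b}" using se by blast
    ultimately have sb: "vs' ! Suc k = b" by blast
    then have "?P (Suc k)" using bsk unfolding vs_def by simp
    then have "\<not> Suc k < j" using jmin by blast
    have "vs' ! k \<noteq> vs' ! Suc k"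
      using nth_eq_iff_index_eq[OF d'(3)] kj(2) bsk d'(2) by simp
    then have "vs' ! k \<noteq> b" using sb by simp
    moreover have "vs' ! k \<in> {a, b}" using se by blast
    ultimately have "vs' ! k = a" by blast
    then have "vs' ! k = vs' ! 0" unfolding vs'_def by simp
    then have "k = 0" using nth_eq_iff_index_eq[OF d'(3)] kj(2) d'(2) by simp
    then show False using ek ne unfolding es'_def by simp
  qed
  have hCy: "hd Cy = a" unfolding Cy_def C1_def vs'_def by simp
  have lCy: "last Cy = b"
  proof -
    have "C1 \<noteq> []" unfolding C1_def vs'_def by simp
    moreover have "rev P2 \<noteq> []" unfolding P2_def using i' by (cases "tl vs") auto
    ultimately have "last Cy = last (rev P2)" unfolding Cy_def using last_append_tl lC1 hC2 by metis
    also have "\<dots> = hd P2" by (simp add: last_rev)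
    also have "\<dots> = b" unfolding P2_def vs_def by simp
    finally show ?thesis .
  qed
  have "ucycle V E ends Cy CE e" unfolding ucycle_def
    using pc len eE eE1 eE2 ends_e hCy lCy unfolding CE_def by auto
  then show ?thesis by blast
qed


lemma hd_last_single:
  assumes "upath V E ends vs es" "hd vs = last vs" shows "vs = [hd vs]"
proof (cases vs)
  case Nil then show ?thesis using upathD(1)[OF assms(1)] by simp
next
  case (Cons a r)
  show ?thesis
  proof (cases r)
    case Nil then show ?thesis using Cons by simp
  next
    case (Cons b r2)
    have "last vs \<in> set r" using \<open>vs = a # r\<close> Cons by simp
    moreover have "a \<notin> set r" using upathD(3)[OF assms(1)] \<open>vs = a # r\<close> by simp
    ultimately show ?thesis using assms(2) \<open>vs = a # r\<close> by simp
  qed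
qed

lemma path_unique:
  assumes t: "\<not> (\<exists>C CE c. ucycle V E ends C CE c)"
  shows "upath V E ends vs es \<Longrightarrow> upath V E ends vs' es' \<Longrightarrow> hd vs = hd vs' \<Longrightarrow>
     last vs = last vs' \<Longrightarrow> vs = vs' \<and> es = es'"
proof (induction vs arbitrary: es vs' es')
  case Nil then show ?case using upathD(1) by blast
next
  case (Cons a r)
  note p = Cons.prems(1) and p' = Cons.prems(2)
  show ?case
  proof (cases r)
    case Nil
    then have "es = []" using upathD(2)[OF p] by simp
    have "hd vs' = last vs'" using Cons.prems(3,4) Nil by simp
    then have "vs' = [hd vs']" using hd_last_single[OF p'] by simp
    then have "es' = []" using upathD(2)[OF p'] by (metis length_0_conv length_Cons list.size(3) nat.inject)
    then show ?thesis using \<open>es = []\<close> \<open>vs' = [hd vs']\<close> Nil Cons.prems(3) by simp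
  next
    case (Cons b r2)
    obtain e er where es: "es = e # er" using upathD(2)[OF p] Cons by (cases es) auto
    have vs'ne: "vs' \<noteq> [hd vs']"
    proof
      assume "vs' = [hd vs']"
      then have "hd (a # r) = last (a # r)" using Cons.prems(3,4) by (metis last_ConsL)
      then show False using hd_last_single[OF p] Cons by simp
    qed
    obtain b' r2' where vs': "vs' = a # b' # r2'"
      using vs'ne Cons.prems(3) upathD(1)[OF p'] by (cases vs'; cases "tl vs'") auto
    obtain e' er' where es': "es' = e' # er'" using upathD(2)[OF p'] vs' by (cases es') auto
    have l: "last (b # r2) = last (b' # r2')" using Cons.prems(4) \<open>r = b # r2\<close> vs' by simp
    show ?thesis
    proof (cases "e = e'")
      case False
      then show ?thesis using diverge_cycle[OF _ _ l False] p p' es es' vs' \<open>r = b # r2\<close> t by blast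
    next
      case True
      have e1: "ends e = {a, b}" using upathD(6)[OF p, of 0] es \<open>r = b # r2\<close> by simp
      have e2: "ends e' = {a, b'}" using upathD(6)[OF p', of 0] es' vs' by simp
      have ab: "a \<noteq> b" using upathD(3)[OF p] \<open>r = b # r2\<close> by simp
      have ab': "a \<noteq> b'" using upathD(3)[OF p'] vs' by simp
      have "{a, b} = {a, b'}" using e1 e2 True by simp
      then have bb: "b = b'" using ab ab' by (auto simp: doubleton_eq_iff)
      have t1: "upath V E ends r er" using upath_tl[OF p] es by simp
      have t2: "upath V E ends (b' # r2') er'" using upath_tl[OF p'] es' vs' by simp
      have "r = b' # r2' \<and> er = er'"
        using Cons.IH[OF t1 t2] bb l \<open>r = b # r2\<close> by simp
      then show ?thesis using vs' es es' True by simp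
    qed
  qed
qed


lemma upath_map:
  assumes p: "upath V E ends vs es" and f: "f ` V \<subseteq> V" "inj_on f V" and h: "h ` E \<subseteq> E"
    and en: "\<And>e. e \<in> E \<Longrightarrow> ends (h e) = f ` ends e"
  shows "upath V E ends (map f vs) (map h es)"
proof -
  note d = upathD[OF p]
  show ?thesis unfolding upath_def
  proof (intro conjI allI impI)
    show "map f vs \<noteq> []" using d(1) by simp
    show "length (map f vs) = Suc (length (map h es))" using d(2) by simp
    show "distinct (map f vs)" using d(3) d(4) inj_on_subset[OF f(2) d(4)] by (simp add: distinct_map)
    show "set (map f vs) \<subseteq> V" using d(4) f(1) by auto
    show "set (map h es) \<subseteq> E" using d(5) h by auto
    fix i assume i: "i < length (map h es)"
    have "es ! i \<in> E" using d(5) i by auto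
    then show "ends (map h es ! i) = {map f vs ! i, map f vs ! Suc i}"
      using en d(6) i d(2) by simp
  qed
qed

lemma utree_path_fixed:
  assumes t: "utree V E ends" and p: "upath V E ends vs es"
    and f: "f ` V \<subseteq> V" "inj_on f V" and h: "h ` E \<subseteq> E"
    and en: "\<And>e. e \<in> E \<Longrightarrow> ends (h e) = f ` ends e"
    and fb: "f (hd vs) = hd vs" and fx: "f (last vs) = last vs"
  shows "\<forall>v\<in>set vs. f v = v" "\<forall>e\<in>set es. h e = e"
proof -
  have nc: "\<not> (\<exists>C CE c. ucycle V E ends C CE c)" using t unfolding utree_def by blast
  have pm: "upath V E ends (map f vs) (map h es)" by (rule upath_map[OF p f h en])
  have ne: "vs \<noteq> []" using upathD(1)[OF p] .
  have "map f vs = vs \<and> map h es = es"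
    using path_unique[OF nc pm p] ne fb fx by (simp add: hd_map last_map)
  then show "\<forall>v\<in>set vs. f v = v" "\<forall>e\<in>set es. h e = e" by (metis map_eq_conv map_ident)+
qed



locale main = group G for G :: "('g, 'b) monoid_scheme" (structure) +
  fixes p :: nat and S :: "'g set"
    and V :: "'v set" and E :: "'e set" and ends :: "'e \<Rightarrow> 'v set"
    and Sv :: "'v \<Rightarrow> 'g set" and Se :: "'e \<Rightarrow> 'g set"
    and Fv :: "'v \<Rightarrow> 'g fus" and Fe :: "'e \<Rightarrow> 'g fus"
    and P Q :: "'g set" and vs :: 'v
  assumes S_sub: "subgroup S G" and S_fin: "finite S"
    and T_tree: "utree V E ends"
    and Sv_sub: "\<forall>v\<in>V. sgrp G S (Sv v)"
    and Se_sub: "\<forall>e\<in>E. sgrp G S (Se e) \<and> (\<forall>v\<in>ends e. Se e \<subseteq> Sv v)"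
    and Fv_fus: "\<forall>v\<in>V. fusion_system G (Sv v) (Fv v)"
    and Fe_fus: "\<forall>e\<in>E. fusion_system G (Se e) (Fe e) \<and> (\<forall>v\<in>ends e. Fe e \<subseteq> Fv v)"
    and vstar: "vs \<in> V" "Sv vs = S"
    and sat: "\<forall>v\<in>V. saturated p G (Sv v) (Fv v)"
    and Fe_triv: "\<forall>e\<in>E. Fe e = FS G (Se e)"
    and Q_sub: "sgrp G S Q" and P_sub: "sgrp G S P" and PQ: "P \<subseteq> Q"
    and P_normal: "\<forall>g\<in>Q. conjm G g ` P = P"
    and P_centric: "centric G S (completion G S V Fv) P"
    and Rep_tree: "utree (rep_nodes (completion G S V Fv) Fv Sv V P)
                         (rep_nodes (completion G S V Fv) Fe Se E P)
                         (rep_ends (completion G S V Fv) Fv Sv ends P)"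
begin

abbreviation "FT \<equiv> completion G S V Fv"

lemma FT_fs: "fusion_system G S FT"
  by (rule completion_fs[OF S_sub, of V Sv Fv]) (use Sv_sub Fv_fus in blast)

lemma ends_V:
  assumes e: "e \<in> E" shows "ends e \<subseteq> V" "ends e \<noteq> {}"
proof -
  have "ugraph V E ends" using T_tree unfolding utree_def by blast
  then obtain u w where "u \<in> V" "w \<in> V" "ends e = {u, w}" using e unfolding ugraph_def by blast
  then show "ends e \<subseteq> V" "ends e \<noteq> {}" by auto
qed

lemma Fv_FT: "v \<in> V \<Longrightarrow> Fv v \<subseteq> FT"
  by (rule completion_sub)

definition fam :: "'i set \<Rightarrow> ('i \<Rightarrow> 'g set) \<Rightarrow> ('i \<Rightarrow> 'g fus) \<Rightarrow> bool" where
  "fam I T F \<longleftrightarrow> (\<forall>i\<in>I. clsctx G S FT (T i) (F i) \<and> FS G (T i) \<subseteq> F i)"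

lemma famD: "fam I T F \<Longrightarrow> i \<in> I \<Longrightarrow> clsctx G S FT (T i) (F i)"
  "fam I T F \<Longrightarrow> i \<in> I \<Longrightarrow> FS G (T i) \<subseteq> F i"
  unfolding fam_def by auto

lemma fam_V: "fam V Sv Fv"
  unfolding fam_def
proof (intro ballI conjI)
  fix v assume v: "v \<in> V"
  show "FS G (Sv v) \<subseteq> Fv v" using fs_FS Fv_fus v by blast
  show "clsctx G S FT (Sv v) (Fv v)" unfolding clsctx_def clsctx_axioms_def
    using FT_fs Fv_fus Sv_sub v is_group by blast
qed

lemma fam_E: "fam E Se Fe"
  unfolding fam_def
proof (intro ballI conjI)
  fix e assume e: "e \<in> E"
  show "FS G (Se e) \<subseteq> Fe e" using Fe_triv e by blast
  show "clsctx G S FT (Se e) (Fe e)" unfolding clsctx_def clsctx_axioms_def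
    using FT_fs Fe_fus Se_sub e is_group by blast
qed

lemma ext_of_FT: "(R, R', \<alpha>) \<in> FT \<Longrightarrow> \<alpha> \<in> extensional R"
  using injhomD(1)[OF fs_mor(3)[OF FT_fs]] by blast

lemma conjQ:
  assumes g: "g \<in> Q"
  shows "(P, P, restrict (conjm G g) P) \<in> FT" "restrict (conjm G g) P ` P = P"
proof -
  have "g \<in> S" using g Q_sub unfolding sgrp_def by blast
  then show "(P, P, restrict (conjm G g) P) \<in> FT"
    using fs_conj[OF FT_fs _ P_sub P_sub] P_normal g by blast
  show "restrict (conjm G g) P ` P = P" using P_normal g by simp
qed

lemma res_node:
  assumes f: "fam I T F" and i: "i \<in> I" and a: "(Q, T i, \<alpha>) \<in> FT"
  shows "rep_res FT F T P (i, cls FT (F i) Q (T i) \<alpha>) = (i, cls FT (F i) P (T i) (restrict \<alpha> P))"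
proof -
  interpret c: clsctx G S FT "T i" "F i" by (rule famD(1)[OF f i])
  let ?\<beta> = "SOME \<phi>. \<phi> \<in> cls FT (F i) Q (T i) \<alpha>"
  have b: "?\<beta> \<in> cls FT (F i) Q (T i) \<alpha>" by (rule c.cls_some(1)[OF a])
  have r: "restrict ?\<beta> P \<in> cls FT (F i) P (T i) (restrict \<alpha> P)"
    by (rule c.cls_res[OF a b P_sub PQ])
  have ra: "(P, T i, restrict \<alpha> P) \<in> FT" by (rule fs_restr[OF FT_fs a P_sub PQ])
  show ?thesis unfolding rep_res_def using c.cls_eq[OF ra r] by simp
qed

lemma act_node:
  assumes f: "fam I T F" and i: "i \<in> I" and a: "(P, T i, \<alpha>) \<in> FT"
    and psi: "(P, P, \<psi>) \<in> FT" "\<psi> ` P = P"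
  shows "rep_act FT F T P \<psi> (i, cls FT (F i) P (T i) \<alpha>) = (i, cls FT (F i) P (T i) (compose P \<alpha> \<psi>))"
proof -
  interpret c: clsctx G S FT "T i" "F i" by (rule famD(1)[OF f i])
  let ?\<beta> = "SOME \<phi>. \<phi> \<in> cls FT (F i) P (T i) \<alpha>"
  have b: "?\<beta> \<in> cls FT (F i) P (T i) \<alpha>" by (rule c.cls_some(1)[OF a])
  have r: "compose P ?\<beta> \<psi> \<in> cls FT (F i) P (T i) (compose P \<alpha> \<psi>)"
    by (rule c.cls_act[OF b psi])
  have ra: "(P, T i, compose P \<alpha> \<psi>) \<in> FT" by (rule fs_comp[OF FT_fs psi(1) a])
  show ?thesis unfolding rep_act_def using c.cls_eq[OF ra r] by simp
qed

lemma img_sub_fixed: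
  assumes f: "fam I T F" and x: "x \<in> rep_nodes FT F T I Q"
  shows "rep_res FT F T P x \<in> rep_fixed FT F T I P (AutQ G Q P)"
proof -
  obtain i \<alpha> where x: "x = (i, cls FT (F i) Q (T i) \<alpha>)" "i \<in> I" "(Q, T i, \<alpha>) \<in> FT"
    using x unfolding rep_nodes_def by blast
  interpret c: clsctx G S FT "T i" "F i" by (rule famD(1)[OF f x(2)])
  have ra: "(P, T i, restrict \<alpha> P) \<in> FT" by (rule fs_restr[OF FT_fs x(3) P_sub PQ])
  have rr: "rep_res FT F T P x = (i, cls FT (F i) P (T i) (restrict \<alpha> P))"
    using res_node[OF f x(2,3)] x(1) by simp
  show ?thesis unfolding rep_fixed_def
  proof (intro CollectI conjI ballI)
    show "rep_res FT F T P x \<in> rep_nodes FT F T I P" unfolding rr rep_nodes_def using x(2) ra by blast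
    fix \<psi> assume "\<psi> \<in> AutQ G Q P"
    then obtain g where g: "g \<in> Q" "\<psi> = restrict (conjm G g) P" unfolding AutQ_def by blast
    have m: "compose P (restrict \<alpha> P) (restrict (conjm G g) P) \<in> cls FT (F i) P (T i) (restrict \<alpha> P)"
      using c.cls_img_fixed[OF x(3) famD(2)[OF f x(2)] P_sub PQ g(1)] P_normal g(1) by blast
    have e1: "rep_act FT F T P (restrict (conjm G g) P) (i, cls FT (F i) P (T i) (restrict \<alpha> P)) =
       (i, cls FT (F i) P (T i) (compose P (restrict \<alpha> P) (restrict (conjm G g) P)))"
      by (rule act_node[OF f x(2) ra conjQ[OF g(1)]])
    show "rep_act FT F T P \<psi> (rep_res FT F T P x) = rep_res FT F T P x"
      unfolding rr g(2) e1 c.cls_eq[OF ra m] ..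
  qed
qed


lemma conj_eq_comm:
  assumes "t \<in> carrier G" "s \<in> carrier G" "y \<in> carrier G" "conjm G t y = conjm G s y"
  shows "(t \<otimes> inv s) \<otimes> y = y \<otimes> (t \<otimes> inv s)"
proof -
  have "t \<otimes> (inv t \<otimes> y \<otimes> t) \<otimes> inv s = t \<otimes> (inv s \<otimes> y \<otimes> s) \<otimes> inv s"
    using assms(4) unfolding conjm_def by simp
  moreover have "t \<otimes> (inv t \<otimes> y \<otimes> t) \<otimes> inv s = y \<otimes> (t \<otimes> inv s)"
    using assms(1-3) by (simp add: m_assoc flip: m_assoc[of t "inv t"])
  moreover have "t \<otimes> (inv s \<otimes> y \<otimes> s) \<otimes> inv s = (t \<otimes> inv s) \<otimes> y"
    using assms(1-3) by (simp add: m_assoc)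
  ultimately show ?thesis by simp
qed

lemma center_img:
  assumes h: "injhom G XX YY \<psi>" "subgroup XX G" "subgroup YY G"
  shows "center_of G (\<psi> ` XX) \<subseteq> \<psi> ` center_of G XX"
proof
  fix z assume z: "z \<in> center_of G (\<psi> ` XX)"
  then obtain x where x: "x \<in> XX" "z = \<psi> x" unfolding center_of_def centralizer_in_def by blast
  have "\<forall>y\<in>XX. x \<otimes> y = y \<otimes> x"
  proof
    fix y assume y: "y \<in> XX"
    have "\<psi> x \<otimes> \<psi> y = \<psi> y \<otimes> \<psi> x" using z x y unfolding center_of_def centralizer_in_def by auto
    then have "\<psi> (x \<otimes> y) = \<psi> (y \<otimes> x)" using injhomD(4)[OF h(1)] x y by simp
    moreover have "x \<otimes> y \<in> XX" "y \<otimes> x \<in> XX" using subgroup.m_closed[OF h(2)] x y by auto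
    ultimately show "x \<otimes> y = y \<otimes> x" using injhomD(3)[OF h(1)] by (meson inj_on_def)
  qed
  then have "x \<in> center_of G XX" using x unfolding center_of_def centralizer_in_def by blast
  then show "z \<in> \<psi> ` center_of G XX" using x by blast
qed

lemma sgrp_sub: "sgrp G A XX \<Longrightarrow> A \<subseteq> B \<Longrightarrow> sgrp G B XX"
  unfolding sgrp_def by blast

lemma fully_cent:
  assumes e: "e \<in> E" "vv \<in> ends e" and g: "(P, Se e, \<gamma>) \<in> FT"
  shows "fully_centralised G (Sv vv) (Fv vv) (\<gamma> ` P)"
  unfolding fully_centralised_def
proof
  have vv: "vv \<in> V" using ends_V(1)[OF e(1)] e(2) by blast
  have fv: "fusion_system G (Sv vv) (Fv vv)" using Fv_fus vv by blast
  have svS: "sgrp G S (Sv vv)" using Sv_sub vv by blast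
  have seS: "sgrp G S (Se e)" "Se e \<subseteq> Sv vv" using Se_sub e by auto
  fix \<psi> assume "\<psi> \<in> Hom (Fv vv) (\<gamma> ` P) (Sv vv)"
  then have ps: "(\<gamma> ` P, Sv vv, \<psi>) \<in> Fv vv" unfolding Hom_def by simp
  let ?XX = "\<gamma> ` P"
  have gi: "(P, ?XX, \<gamma>) \<in> FT" by (rule fs_img[OF FT_fs g])
  have psFT: "(?XX, Sv vv, \<psi>) \<in> FT" using ps Fv_FT[OF vv] by blast
  have c1: "(P, Sv vv, compose P \<psi> \<gamma>) \<in> FT" by (rule fs_comp[OF FT_fs gi psFT])
  have SS: "sgrp G S S" using S_sub unfolding sgrp_def by blast
  have sv_sub_S: "Sv vv \<subseteq> S" using svS unfolding sgrp_def by blast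
  have imc: "compose P \<psi> \<gamma> ` P = \<psi> ` ?XX"
  proof -
    have "compose P \<psi> \<gamma> ` P = (\<psi> \<circ> \<gamma>) ` P" by (rule image_cong) (simp_all add: compose_def)
    then show ?thesis by (simp add: image_comp)
  qed
  have c2: "(P, S, compose P \<psi> \<gamma>) \<in> FT"
    using fs_target[OF FT_fs c1 SS] fs_img_sub[OF FT_fs c1] sv_sub_S by blast
  have cen1: "centralizer_in G S (\<psi> ` ?XX) = center_of G (\<psi> ` ?XX)"
    using P_centric c2 imc unfolding centric_def Hom_def by force
  have g2: "(P, S, \<gamma>) \<in> FT" using fs_target[OF FT_fs g SS] fs_img_sub[OF FT_fs g] seS unfolding sgrp_def by blast
  have Xs: "sgrp G (Sv vv) ?XX" using fs_mor(1)[OF fv ps] .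
  have hom: "injhom G ?XX (Sv vv) \<psi>" using fs_mor(3)[OF fv ps] .
  have sgX: "subgroup ?XX G" "subgroup (Sv vv) G" using Xs svS unfolding sgrp_def by auto
  have fin: "finite (centralizer_in G (Sv vv) ?XX)" using S_fin sv_sub_S
    unfolding centralizer_in_def by (auto intro: finite_subset)
  have "center_of G ?XX \<subseteq> S" using Xs sv_sub_S
    unfolding center_of_def centralizer_in_def sgrp_def by blast
  then have fin2: "finite (center_of G ?XX)" using S_fin by (rule finite_subset)
  have "card (centralizer_in G (Sv vv) (\<psi> ` ?XX)) \<le> card (centralizer_in G S (\<psi> ` ?XX))"
    using sv_sub_S S_fin unfolding centralizer_in_def by (intro card_mono) (auto intro: finite_subset)
  also have "\<dots> = card (center_of G (\<psi> ` ?XX))" using cen1 by simp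
  also have "\<dots> \<le> card (\<psi> ` center_of G ?XX)"
    using center_img[OF hom sgX] fin2 by (intro card_mono) auto
  also have "\<dots> \<le> card (center_of G ?XX)" by (rule card_image_le[OF fin2])
  also have "\<dots> \<le> card (centralizer_in G (Sv vv) ?XX)"
  proof (rule card_mono[OF fin])
    show "center_of G ?XX \<subseteq> centralizer_in G (Sv vv) ?XX"
      using Xs unfolding center_of_def centralizer_in_def sgrp_def by blast
  qed
  finally show "card (centralizer_in G (Sv vv) (\<psi> ` ?XX)) \<le> card (centralizer_in G (Sv vv) ?XX)" .
qed


lemma core_step:
  assumes e: "e \<in> E" "vv \<in> ends e" and g: "(P, Se e, \<gamma>) \<in> FT"
    and fx: "\<forall>q\<in>Q. \<exists>s\<in>Se e. \<forall>x\<in>P. \<gamma> (conjm G q x) = conjm G s (\<gamma> x)"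
    and ph: "(Q, Sv vv, \<phi>) \<in> FT" "restrict \<phi> P \<in> cls FT (Fv vv) P (Sv vv) \<gamma>"
  shows "\<exists>\<phi>'. (Q, Se e, \<phi>') \<in> FT \<and> restrict \<phi>' P = \<gamma>"
proof -
  have vv: "vv \<in> V" using ends_V(1)[OF e(1)] e(2) by blast
  have fv: "fusion_system G (Sv vv) (Fv vv)" using Fv_fus vv by blast
  have svS: "sgrp G S (Sv vv)" using Sv_sub vv by blast
  have seS: "sgrp G S (Se e)" "Se e \<subseteq> Sv vv" using Se_sub e by auto
  have SS: "sgrp G S S" using S_sub unfolding sgrp_def by blast
  have svsv: "sgrp G (Sv vv) (Sv vv)" using svS unfolding sgrp_def by blast
  have sv_sub_S: "Sv vv \<subseteq> S" using svS unfolding sgrp_def by blast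
  have FvFT: "Fv vv \<subseteq> FT" by (rule Fv_FT[OF vv])
  define \<alpha> where "\<alpha> = restrict \<phi> P"
  obtain \<chi> where ch: "(\<gamma> ` P, \<alpha> ` P, \<chi>) \<in> Fv vv" "bij_betw \<chi> (\<gamma> ` P) (\<alpha> ` P)"
    "\<alpha> = compose P \<chi> \<gamma>"
    using ph(2) unfolding cls_def \<alpha>_def by blast
  have aP: "\<alpha> ` P = \<phi> ` P" unfolding \<alpha>_def by simp
  have chinj: "inj_on \<chi> (\<gamma> ` P)" and chim: "\<chi> ` (\<gamma> ` P) = \<alpha> ` P"
    using ch(2) by (auto simp: bij_betw_def)
  have ax: "\<And>x. x \<in> P \<Longrightarrow> \<phi> x = \<chi> (\<gamma> x)"
  proof -
    fix x assume x: "x \<in> P"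
    have "\<alpha> x = compose P \<chi> \<gamma> x" using ch(3) by simp
    then show "\<phi> x = \<chi> (\<gamma> x)" using x unfolding \<alpha>_def by (simp add: compose_def)
  qed
  define ci where "ci = restrict (inv_into (\<gamma> ` P) \<chi>) (\<alpha> ` P)"
  have ci1: "(\<alpha> ` P, \<gamma> ` P, ci) \<in> Fv vv" using fs_inv[OF fv ch(1)] chim unfolding ci_def by simp
  have ci2: "(\<alpha> ` P, Sv vv, ci) \<in> Fv vv"
    using fs_target[OF fv ci1 svsv] fs_img_sub[OF fv ci1] fs_mor(2)[OF fv ci1] unfolding sgrp_def by blast
  have cichi: "\<And>y. y \<in> \<gamma> ` P \<Longrightarrow> ci (\<chi> y) = y"
  proof -
    fix y assume y: "y \<in> \<gamma> ` P"
    have "\<chi> y \<in> \<alpha> ` P" using y chim by blast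
    then show "ci (\<chi> y) = y" unfolding ci_def using chinj y by (simp add: inv_into_f_f)
  qed
  have ciim: "ci ` (\<alpha> ` P) = \<gamma> ` P"
  proof
    show "ci ` (\<alpha> ` P) \<subseteq> \<gamma> ` P" using fs_img_sub[OF fv ci1] .
    show "\<gamma> ` P \<subseteq> ci ` (\<alpha> ` P)"
    proof
      fix y assume y: "y \<in> \<gamma> ` P"
      then have "\<chi> y \<in> \<alpha> ` P" using chim by blast
      then show "y \<in> ci ` (\<alpha> ` P)" using cichi[OF y] by (metis image_eqI)
    qed
  qed
  have fc: "fully_centralised G (Sv vv) (Fv vv) (ci ` (\<alpha> ` P))"
    using fully_cent[OF e g] ciim by simp
  have satv: "saturated p G (Sv vv) (Fv vv)" using sat vv by blast
  have "ci \<in> Hom (Fv vv) (\<alpha> ` P) (Sv vv)" using ci2 unfolding Hom_def by simp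
  then obtain \<psi> where psi: "\<psi> \<in> Hom (Fv vv) (N_phi G (Sv vv) (\<alpha> ` P) ci) (Sv vv)"
    "restrict \<psi> (\<alpha> ` P) = ci"
    using satv fc unfolding saturated_def by blast
  define N where "N = N_phi G (Sv vv) (\<alpha> ` P) ci"
  have psN: "(N, Sv vv, \<psi>) \<in> Fv vv" using psi(1) unfolding Hom_def N_def by simp
  have Nsg: "sgrp G S N" using sgrp_sub[OF fs_mor(1)[OF fv psN] sv_sub_S] .
  have homphi: "injhom G Q (Sv vv) \<phi>" using fs_mor(3)[OF FT_fs ph(1)] .
  have sQ: "subgroup Q G" "subgroup (Sv vv) G" using Q_sub svS unfolding sgrp_def by auto
  have homg: "injhom G P (Se e) \<gamma>" using fs_mor(3)[OF FT_fs g] .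
  have sP: "subgroup P G" "subgroup (Se e) G" using P_sub seS unfolding sgrp_def by auto
  have PQc: "\<And>q x. q \<in> Q \<Longrightarrow> x \<in> P \<Longrightarrow> conjm G q x \<in> P" using P_normal by blast
  have QN: "\<phi> ` Q \<subseteq> N"
  proof
    fix z assume "z \<in> \<phi> ` Q"
    then obtain q where q: "q \<in> Q" "z = \<phi> q" by blast
    obtain s where s: "s \<in> Se e" "\<forall>x\<in>P. \<gamma> (conjm G q x) = conjm G s (\<gamma> x)" using fx q(1) by blast
    have zs: "z \<in> Sv vv" using injhom_carrier(2)[OF homphi sQ(2) q(1)] q(2) by simp
    have cjphi: "\<And>x. x \<in> P \<Longrightarrow> \<phi> (conjm G q x) = conjm G z (\<phi> x)"
      using injhom_conj[OF homphi sQ] q PQ by blast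
    have nz: "conjm G z ` (\<alpha> ` P) = \<alpha> ` P"
    proof -
      have "(conjm G z \<circ> \<phi>) ` P = (\<phi> \<circ> conjm G q) ` P" by (rule image_cong) (simp_all add: cjphi)
      then have "conjm G z ` (\<phi> ` P) = \<phi> ` (conjm G q ` P)" by (simp add: image_comp)
      then show ?thesis using aP P_normal q(1) by simp
    qed
    have zn: "z \<in> normalizer_in G (Sv vv) (\<alpha> ` P)" unfolding normalizer_in_def using zs nz by blast
    have sS: "s \<in> Sv vv" using s(1) seS(2) by blast
    have cjg: "\<And>x. x \<in> P \<Longrightarrow> \<gamma> (conjm G q x) = conjm G s (\<gamma> x)" using s(2) by blast
    have ns: "conjm G s ` (\<gamma> ` P) = \<gamma> ` P"
    proof -
      have "(conjm G s \<circ> \<gamma>) ` P = (\<gamma> \<circ> conjm G q) ` P" by (rule image_cong) (simp_all add: cjg)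
      then have "conjm G s ` (\<gamma> ` P) = \<gamma> ` (conjm G q ` P)" by (simp add: image_comp)
      then show ?thesis using P_normal q(1) by simp
    qed
    have snorm: "s \<in> normalizer_in G (Sv vv) (\<gamma> ` P)" unfolding normalizer_in_def using sS ns by blast
    have ciinj: "inj_on ci (\<alpha> ` P)" using injhomD(3)[OF fs_mor(3)[OF fv ci1]] .
    have meq: "restrict (\<lambda>y. ci (conjm G z (inv_into (\<alpha> ` P) ci y))) (ci ` (\<alpha> ` P))
             = restrict (conjm G s) (\<gamma> ` P)"
    proof (rule ext)
      fix y show "restrict (\<lambda>y. ci (conjm G z (inv_into (\<alpha> ` P) ci y))) (ci ` (\<alpha> ` P)) y
             = restrict (conjm G s) (\<gamma> ` P) y"
      proof (cases "y \<in> \<gamma> ` P")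
        case True
        then obtain x where x: "x \<in> P" "y = \<gamma> x" by blast
        have cy: "\<chi> y \<in> \<alpha> ` P" using True chim by blast
        have "inv_into (\<alpha> ` P) ci y = \<chi> y"
          using inv_into_f_eq[OF ciinj cy cichi[OF True]] .
        also have "\<dots> = \<phi> x" using ax[OF x(1)] x(2) by simp
        finally have i1: "inv_into (\<alpha> ` P) ci y = \<phi> x" .
        have "conjm G z (\<phi> x) = \<phi> (conjm G q x)" using cjphi[OF x(1)] by simp
        also have "\<dots> = \<chi> (\<gamma> (conjm G q x))" using ax[OF PQc[OF q(1) x(1)]] .
        finally have i2: "conjm G z (\<phi> x) = \<chi> (\<gamma> (conjm G q x))" .
        have gP: "\<gamma> (conjm G q x) \<in> \<gamma> ` P" using PQc[OF q(1) x(1)] by blast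
        have "ci (conjm G z (inv_into (\<alpha> ` P) ci y)) = \<gamma> (conjm G q x)"
          using i1 i2 cichi[OF gP] by simp
        also have "\<dots> = conjm G s y" using cjg[OF x(1)] x(2) by simp
        finally show ?thesis using True ciim by simp
      next
        case False then show ?thesis using ciim by simp
      qed
    qed
    have "restrict (\<lambda>y. ci (conjm G z (inv_into (\<alpha> ` P) ci y))) (ci ` (\<alpha> ` P))
             \<in> AutX G (Sv vv) (ci ` (\<alpha> ` P))"
      unfolding meq unfolding ciim AutX_def using snorm by blast
    then show "z \<in> N" unfolding N_def N_phi_def using zn by blast
  qed
  have phN: "(Q, N, \<phi>) \<in> FT" by (rule fs_target[OF FT_fs ph(1) Nsg QN])
  define \<phi>' where "\<phi>' = compose Q \<psi> \<phi>"
  have ph1: "(Q, Sv vv, \<phi>') \<in> FT" unfolding \<phi>'_def using fs_comp[OF FT_fs phN] psN FvFT by blast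
  have res: "restrict \<phi>' P = \<gamma>"
  proof (rule ext)
    fix x show "restrict \<phi>' P x = \<gamma> x"
    proof (cases "x \<in> P")
      case True
      have xQ: "x \<in> Q" using True PQ by blast
      have fa: "\<phi> x \<in> \<alpha> ` P" using True aP by blast
      have "\<psi> (\<phi> x) = ci (\<phi> x)" using psi(2) fa by (metis restrict_apply')
      also have "\<dots> = \<gamma> x" using ax[OF True] cichi True by simp
      finally show ?thesis using True xQ unfolding \<phi>'_def by (simp add: compose_def)
    next
      case False then show ?thesis using injhomD(1)[OF homg] by (simp add: extensional_def)
    qed
  qed
  have homphi': "injhom G Q (Sv vv) \<phi>'" using fs_mor(3)[OF FT_fs ph1] .
  have phi'P: "\<And>x. x \<in> P \<Longrightarrow> \<phi>' x = \<gamma> x" using res by (metis restrict_apply')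
  have cent: "centralizer_in G S (\<gamma> ` P) = center_of G (\<gamma> ` P)"
  proof -
    have "(P, S, \<gamma>) \<in> FT" using fs_target[OF FT_fs g SS] fs_img_sub[OF FT_fs g] seS
      unfolding sgrp_def by blast
    then show ?thesis using P_centric unfolding centric_def Hom_def by blast
  qed
  have imgSe: "\<phi>' ` Q \<subseteq> Se e"
  proof
    fix t assume "t \<in> \<phi>' ` Q"
    then obtain q where q: "q \<in> Q" "t = \<phi>' q" by blast
    obtain s where s: "s \<in> Se e" "\<forall>x\<in>P. \<gamma> (conjm G q x) = conjm G s (\<gamma> x)" using fx q(1) by blast
    have tS: "t \<in> Sv vv" using injhom_carrier(2)[OF homphi' sQ(2) q(1)] q(2) by simp
    have tc: "t \<in> carrier G" by (rule subgroup.mem_carrier[OF sQ(2) tS])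
    have sc: "s \<in> carrier G" by (rule subgroup.mem_carrier[OF sP(2) s(1)])
    have tsS: "t \<otimes> inv s \<in> S"
    proof -
      have ts: "t \<in> S" "s \<in> S" using tS sv_sub_S s(1) seS(2) by auto
      show ?thesis by (rule subgroup.m_closed[OF S_sub ts(1) subgroup.m_inv_closed[OF S_sub ts(2)]])
    qed
    have comm: "\<forall>y\<in>\<gamma> ` P. (t \<otimes> inv s) \<otimes> y = y \<otimes> (t \<otimes> inv s)"
    proof
      fix y assume "y \<in> \<gamma> ` P"
      then obtain x where x: "x \<in> P" "y = \<gamma> x" by blast
      have xQ: "x \<in> Q" using x(1) PQ by blast
      have yc: "y \<in> carrier G" using injhom_carrier(1)[OF homg sP(2) x(1)] x(2) by simp
      have "conjm G t y = conjm G (\<phi>' q) (\<phi>' x)" using q(2) x(2) phi'P[OF x(1)] by simp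
      also have "\<dots> = \<phi>' (conjm G q x)" using injhom_conj[OF homphi' sQ xQ q(1)] by simp
      also have "\<dots> = \<gamma> (conjm G q x)" using phi'P[OF PQc[OF q(1) x(1)]] .
      also have "\<dots> = conjm G s y" using s(2) x by simp
      finally show "(t \<otimes> inv s) \<otimes> y = y \<otimes> (t \<otimes> inv s)" by (rule conj_eq_comm[OF tc sc yc])
    qed
    have "t \<otimes> inv s \<in> centralizer_in G S (\<gamma> ` P)"
      unfolding centralizer_in_def using tsS comm by blast
    then have "t \<otimes> inv s \<in> \<gamma> ` P" using cent unfolding center_of_def centralizer_in_def by blast
    then have c1: "t \<otimes> inv s \<in> Se e" using fs_img_sub[OF FT_fs g] by blast
    have "t = (t \<otimes> inv s) \<otimes> s" using tc sc by (simp add: m_assoc)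
    then show "t \<in> Se e" using subgroup.m_closed[OF sP(2) c1 s(1)] by simp
  qed
  have "(Q, Se e, \<phi>') \<in> FT" by (rule fs_target[OF FT_fs ph1 seS(1) imgSe])
  then show ?thesis using res by blast
qed


abbreviation "RV \<equiv> rep_nodes FT Fv Sv V P"
abbreviation "RE \<equiv> rep_nodes FT Fe Se E P"
abbreviation "RN \<equiv> rep_ends FT Fv Sv ends P"
abbreviation "ImV \<equiv> rep_res FT Fv Sv P ` rep_nodes FT Fv Sv V Q"
abbreviation "ImE \<equiv> rep_res FT Fe Se P ` rep_nodes FT Fe Se E Q"

lemma e_facts:
  assumes e: "e \<in> E" "vv \<in> ends e"
  shows "vv \<in> V" "sgrp G S (Sv vv)" "Se e \<subseteq> Sv vv" "Fe e \<subseteq> Fv vv" "sgrp G S (Se e)"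
  using ends_V(1)[OF e(1)] e Sv_sub Se_sub Fe_fus by auto

lemma to_Sv:
  assumes e: "e \<in> E" "vv \<in> ends e" and g: "(R, Se e, \<gamma>) \<in> FT"
  shows "(R, Sv vv, \<gamma>) \<in> FT"
  using fs_target[OF FT_fs g e_facts(2)[OF e]] fs_img_sub[OF FT_fs g] e_facts(3)[OF e] by blast

lemma RN_node:
  assumes e: "e \<in> E" and g: "(P, Se e, \<gamma>) \<in> FT"
  shows "RN (e, cls FT (Fe e) P (Se e) \<gamma>) = (\<lambda>vv. (vv, cls FT (Fv vv) P (Sv vv) \<gamma>)) ` ends e"
proof -
  interpret c: clsctx G S FT "Se e" "Fe e" by (rule famD(1)[OF fam_E e])
  let ?\<beta> = "SOME \<phi>. \<phi> \<in> cls FT (Fe e) P (Se e) \<gamma>"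
  have b: "?\<beta> \<in> cls FT (Fe e) P (Se e) \<gamma>" by (rule c.cls_some(1)[OF g])
  have "\<And>vv. vv \<in> ends e \<Longrightarrow> cls FT (Fv vv) P (Sv vv) ?\<beta> = cls FT (Fv vv) P (Sv vv) \<gamma>"
  proof -
    fix vv assume vv: "vv \<in> ends e"
    note ef = e_facts[OF e vv]
    interpret cv: clsctx G S FT "Sv vv" "Fv vv" by (rule famD(1)[OF fam_V ef(1)])
    have "?\<beta> \<in> cls FT (Fv vv) P (Sv vv) \<gamma>"
      by (rule cls_mono[OF ef(4) b FT_fs ef(2) ef(3) is_group])
    then show "cls FT (Fv vv) P (Sv vv) ?\<beta> = cls FT (Fv vv) P (Sv vv) \<gamma>"
      by (rule cv.cls_eq[OF to_Sv[OF e vv g]])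
  qed
  then show ?thesis unfolding rep_ends_def by (auto intro!: image_cong)
qed

lemma conj_conj: "g \<in> carrier G \<Longrightarrow> x \<in> carrier G \<Longrightarrow> conjm G g (conjm G (inv g) x) = x"
  unfolding conjm_def by (simp add: m_assoc flip: m_assoc[of "inv g" g])

lemma act_closed:
  assumes f: "fam I T F" and y: "y \<in> rep_nodes FT F T I P" and g: "g \<in> Q"
  shows "rep_act FT F T P (restrict (conjm G g) P) y \<in> rep_nodes FT F T I P"
proof -
  obtain i \<alpha> where y: "y = (i, cls FT (F i) P (T i) \<alpha>)" "i \<in> I" "(P, T i, \<alpha>) \<in> FT"
    using y unfolding rep_nodes_def by blast
  have "(P, T i, compose P \<alpha> (restrict (conjm G g) P)) \<in> FT"
    by (rule fs_comp[OF FT_fs conjQ(1)[OF g] y(3)])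
  then show ?thesis using act_node[OF f y(2,3) conjQ[OF g]] y unfolding rep_nodes_def by auto
qed

lemma act_inv:
  assumes f: "fam I T F" and y: "y \<in> rep_nodes FT F T I P" and g: "g \<in> Q"
  shows "rep_act FT F T P (restrict (conjm G (inv g)) P) (rep_act FT F T P (restrict (conjm G g) P) y) = y"
proof -
  obtain i \<alpha> where y: "y = (i, cls FT (F i) P (T i) \<alpha>)" "i \<in> I" "(P, T i, \<alpha>) \<in> FT"
    using y unfolding rep_nodes_def by blast
  have sQ: "subgroup Q G" using Q_sub unfolding sgrp_def by blast
  have ig: "inv g \<in> Q" by (rule subgroup.m_inv_closed[OF sQ g])
  have gc: "g \<in> carrier G" by (rule subgroup.mem_carrier[OF sQ g])
  have Pc: "P \<subseteq> carrier G" using P_sub unfolding sgrp_def using subgroup.subset by blast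
  have c1: "(P, T i, compose P \<alpha> (restrict (conjm G g) P)) \<in> FT"
    by (rule fs_comp[OF FT_fs conjQ(1)[OF g] y(3)])
  have e: "compose P (compose P \<alpha> (restrict (conjm G g) P)) (restrict (conjm G (inv g)) P) = \<alpha>"
  proof (rule ext)
    fix x show "compose P (compose P \<alpha> (restrict (conjm G g) P)) (restrict (conjm G (inv g)) P) x = \<alpha> x"
    proof (cases "x \<in> P")
      case True
      have i1: "conjm G (inv g) x \<in> P" using P_normal ig True by blast
      have "conjm G g (conjm G (inv g) x) = x" using conj_conj gc True Pc by blast
      then show ?thesis using True i1 by (simp add: compose_def)
    next
      case False then show ?thesis using ext_of_FT[OF y(3)] by (simp add: compose_def extensional_def)
    qed
  qed
  show ?thesis using act_node[OF f y(2,3) conjQ[OF g]] act_node[OF f y(2) c1 conjQ[OF ig]] e y(1) by simp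
qed


lemma fixed_conj:
  assumes ed: "ed \<in> rep_fixed FT Fe Se E P (AutQ G Q P)" and e: "ed = (e, cls FT (Fe e) P (Se e) \<gamma>)"
    "e \<in> E" "(P, Se e, \<gamma>) \<in> FT" and g: "g \<in> Q"
  shows "compose P \<gamma> (restrict (conjm G g) P) \<in> cls FT (Fe e) P (Se e) \<gamma>"
proof -
  interpret c: clsctx G S FT "Se e" "Fe e" by (rule famD(1)[OF fam_E e(2)])
  have "restrict (conjm G g) P \<in> AutQ G Q P" unfolding AutQ_def using g by blast
  then have "rep_act FT Fe Se P (restrict (conjm G g) P) ed = ed" using ed unfolding rep_fixed_def by blast
  then have "cls FT (Fe e) P (Se e) (compose P \<gamma> (restrict (conjm G g) P)) = cls FT (Fe e) P (Se e) \<gamma>"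
    using act_node[OF fam_E e(2,3) conjQ[OF g]] e(1) by simp
  moreover have "(P, Se e, compose P \<gamma> (restrict (conjm G g) P)) \<in> FT"
    by (rule fs_comp[OF FT_fs conjQ(1)[OF g] e(3)])
  ultimately show ?thesis using c.cls_eq_iff[OF e(3)] by blast
qed

lemma node_step:
  assumes ed: "ed \<in> rep_fixed FT Fe Se E P (AutQ G Q P)" and u: "u \<in> RN ed" "u \<in> ImV"
    and w: "w \<in> RN ed"
  shows "w \<in> ImV \<and> ed \<in> ImE"
proof -
  obtain e \<gamma> where e: "ed = (e, cls FT (Fe e) P (Se e) \<gamma>)" "e \<in> E" "(P, Se e, \<gamma>) \<in> FT"
    using ed unfolding rep_fixed_def rep_nodes_def by blast
  have rn: "RN ed = (\<lambda>vv. (vv, cls FT (Fv vv) P (Sv vv) \<gamma>)) ` ends e" using RN_node[OF e(2,3)] e(1) by simp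
  obtain vv where vv: "vv \<in> ends e" "u = (vv, cls FT (Fv vv) P (Sv vv) \<gamma>)" using u(1) rn by blast
  obtain w0 where w0: "w0 \<in> ends e" "w = (w0, cls FT (Fv w0) P (Sv w0) \<gamma>)" using w rn by blast
  obtain y where y: "y \<in> rep_nodes FT Fv Sv V Q" "u = rep_res FT Fv Sv P y" using u(2) by blast
  obtain v' \<phi> where yy: "y = (v', cls FT (Fv v') Q (Sv v') \<phi>)" "v' \<in> V" "(Q, Sv v', \<phi>) \<in> FT"
    using y(1) unfolding rep_nodes_def by blast
  have "u = (v', cls FT (Fv v') P (Sv v') (restrict \<phi> P))" using res_node[OF fam_V yy(2,3)] y(2) yy(1) by simp
  then have v'v: "v' = vv" and ceq: "cls FT (Fv vv) P (Sv vv) (restrict \<phi> P) = cls FT (Fv vv) P (Sv vv) \<gamma>"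
    using vv(2) by auto
  note ef = e_facts[OF e(2) vv(1)]
  interpret cv: clsctx G S FT "Sv vv" "Fv vv" by (rule famD(1)[OF fam_V ef(1)])
  have phv: "(Q, Sv vv, \<phi>) \<in> FT" using yy(3) v'v by simp
  have rphi: "(P, Sv vv, restrict \<phi> P) \<in> FT" by (rule fs_restr[OF FT_fs phv P_sub PQ])
  have mem: "restrict \<phi> P \<in> cls FT (Fv vv) P (Sv vv) \<gamma>" using cv.cls_refl[OF rphi] ceq by simp
  interpret ce: clsctx G S FT "Se e" "Fe e" by (rule famD(1)[OF fam_E e(2)])
  have fx: "\<forall>q\<in>Q. \<exists>s\<in>Se e. \<forall>x\<in>P. \<gamma> (conjm G q x) = conjm G s (\<gamma> x)"
  proof
    fix q assume q: "q \<in> Q"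
    have "compose P \<gamma> (restrict (conjm G q) P) \<in> cls FT (FS G (Se e)) P (Se e) \<gamma>"
      using fixed_conj[OF ed e q] Fe_triv e(2) by simp
    then obtain s where "s \<in> Se e" "\<forall>x\<in>P. \<gamma> (restrict (conjm G q) P x) = conjm G s (\<gamma> x)"
      using ce.cls_FS_conj by blast
    then show "\<exists>s\<in>Se e. \<forall>x\<in>P. \<gamma> (conjm G q x) = conjm G s (\<gamma> x)" by auto
  qed
  obtain \<phi>' where ph': "(Q, Se e, \<phi>') \<in> FT" "restrict \<phi>' P = \<gamma>"
    using core_step[OF e(2) vv(1) e(3) fx phv mem] by blast
  have "(e, cls FT (Fe e) Q (Se e) \<phi>') \<in> rep_nodes FT Fe Se E Q"
    unfolding rep_nodes_def using e(2) ph'(1) by blast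
  moreover have "rep_res FT Fe Se P (e, cls FT (Fe e) Q (Se e) \<phi>') = ed"
    using res_node[OF fam_E e(2) ph'(1)] ph'(2) e(1) by simp
  ultimately have edI: "ed \<in> ImE" by (metis image_eqI)
  note ew = e_facts[OF e(2) w0(1)]
  have phw: "(Q, Sv w0, \<phi>') \<in> FT" by (rule to_Sv[OF e(2) w0(1) ph'(1)])
  have "(w0, cls FT (Fv w0) Q (Sv w0) \<phi>') \<in> rep_nodes FT Fv Sv V Q"
    unfolding rep_nodes_def using ew(1) phw by blast
  moreover have "rep_res FT Fv Sv P (w0, cls FT (Fv w0) Q (Sv w0) \<phi>') = w"
    using res_node[OF fam_V ew(1) phw] ph'(2) w0(2) by simp
  ultimately have "w \<in> ImV" by (metis image_eqI)
  then show ?thesis using edI by blast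
qed


lemma RN_act:
  assumes ed: "ed \<in> RE" and g: "g \<in> Q"
  shows "RN (rep_act FT Fe Se P (restrict (conjm G g) P) ed) = rep_act FT Fv Sv P (restrict (conjm G g) P) ` RN ed"
proof -
  let ?\<psi> = "restrict (conjm G g) P"
  obtain e \<gamma> where e: "ed = (e, cls FT (Fe e) P (Se e) \<gamma>)" "e \<in> E" "(P, Se e, \<gamma>) \<in> FT"
    using ed unfolding rep_nodes_def by blast
  have c: "(P, Se e, compose P \<gamma> ?\<psi>) \<in> FT" by (rule fs_comp[OF FT_fs conjQ(1)[OF g] e(3)])
  have "rep_act FT Fe Se P ?\<psi> ed = (e, cls FT (Fe e) P (Se e) (compose P \<gamma> ?\<psi>))"
    using act_node[OF fam_E e(2,3) conjQ[OF g]] e(1) by simp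
  then have l: "RN (rep_act FT Fe Se P ?\<psi> ed) = (\<lambda>vv. (vv, cls FT (Fv vv) P (Sv vv) (compose P \<gamma> ?\<psi>))) ` ends e"
    using RN_node[OF e(2) c] by simp
  have r: "RN ed = (\<lambda>vv. (vv, cls FT (Fv vv) P (Sv vv) \<gamma>)) ` ends e" using RN_node[OF e(2,3)] e(1) by simp
  have "\<And>vv. vv \<in> ends e \<Longrightarrow> rep_act FT Fv Sv P ?\<psi> (vv, cls FT (Fv vv) P (Sv vv) \<gamma>) =
      (vv, cls FT (Fv vv) P (Sv vv) (compose P \<gamma> ?\<psi>))"
    using act_node[OF fam_V e_facts(1)[OF e(2)] to_Sv[OF e(2) _ e(3)] conjQ[OF g]] by blast
  then show ?thesis unfolding l r image_image by (auto intro!: image_cong)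
qed

lemma fixV:
  assumes x: "x \<in> rep_fixed FT Fv Sv V P (AutQ G Q P)"
  shows "x \<in> ImV"
proof -
  have Sv_vs: "sgrp G S (Sv vs)" using Sv_sub vstar by blast
  have QS: "Q \<subseteq> Sv vs" using Q_sub vstar unfolding sgrp_def by blast
  have inc: "(Q, Sv vs, restrict id Q) \<in> FT" by (rule fs_incl[OF FT_fs Q_sub Sv_vs QS])
  define b where "b = rep_res FT Fv Sv P (vs, cls FT (Fv vs) Q (Sv vs) (restrict id Q))"
  have bn: "(vs, cls FT (Fv vs) Q (Sv vs) (restrict id Q)) \<in> rep_nodes FT Fv Sv V Q"
    unfolding rep_nodes_def using vstar(1) inc by blast
  have bI: "b \<in> ImV" unfolding b_def using bn by blast
  have bF: "b \<in> rep_fixed FT Fv Sv V P (AutQ G Q P)" unfolding b_def by (rule img_sub_fixed[OF fam_V bn])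
  have bRV: "b \<in> RV" and xRV: "x \<in> RV" using bF x unfolding rep_fixed_def by auto
  have tr: "utree RV RE RN" using Rep_tree .
  obtain vl el where pth: "upath RV RE RN vl el" "hd vl = b" "last vl = x"
    using tr bRV xRV unfolding utree_def uconnected_def by blast
  have efix: "\<forall>ed\<in>set el. ed \<in> rep_fixed FT Fe Se E P (AutQ G Q P)"
  proof
    fix ed assume edl: "ed \<in> set el"
    have edRE: "ed \<in> RE" using upathD(5)[OF pth(1)] edl by blast
    have "\<forall>\<psi>\<in>AutQ G Q P. rep_act FT Fe Se P \<psi> ed = ed"
    proof
      fix \<psi> assume "\<psi> \<in> AutQ G Q P"
      then obtain g where g: "g \<in> Q" "\<psi> = restrict (conjm G g) P" unfolding AutQ_def by blast
      let ?f = "rep_act FT Fv Sv P \<psi>" and ?h = "rep_act FT Fe Se P \<psi>"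
      have sQ: "subgroup Q G" using Q_sub unfolding sgrp_def by blast
      have ig: "inv g \<in> Q" by (rule subgroup.m_inv_closed[OF sQ g(1)])
      have f1: "?f ` RV \<subseteq> RV" using act_closed[OF fam_V _ g(1)] g(2) by blast
      have f2: "inj_on ?f RV"
        using act_inv[OF fam_V _ g(1)] g(2) by (metis inj_on_inverseI)
      have h1: "?h ` RE \<subseteq> RE" using act_closed[OF fam_E _ g(1)] g(2) by blast
      have en: "\<And>e. e \<in> RE \<Longrightarrow> RN (?h e) = ?f ` RN e" using RN_act g by blast
      have fb: "?f (hd vl) = hd vl" using bF pth(2) \<open>\<psi> \<in> AutQ G Q P\<close> unfolding rep_fixed_def by blast
      have fx: "?f (last vl) = last vl" using x pth(3) \<open>\<psi> \<in> AutQ G Q P\<close> unfolding rep_fixed_def by blast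
      show "?h ed = ed" using utree_path_fixed(2)[OF tr pth(1) f1 f2 h1 en fb fx] edl by blast
    qed
    then show "ed \<in> rep_fixed FT Fe Se E P (AutQ G Q P)" unfolding rep_fixed_def using edRE by blast
  qed
  note d = upathD[OF pth(1)]
  have "\<forall>k\<le>length el. vl ! k \<in> ImV"
  proof (intro allI impI)
    fix k assume "k \<le> length el"
    then show "vl ! k \<in> ImV"
    proof (induction k)
      case 0 then show ?case using bI pth(2) d(1) by (simp add: hd_conv_nth)
    next
      case (Suc k)
      then have k: "k < length el" by simp
      have ek: "RN (el ! k) = {vl ! k, vl ! Suc k}" using d(6)[OF k] .
      have "el ! k \<in> set el" using k by simp
      then have fe: "el ! k \<in> rep_fixed FT Fe Se E P (AutQ G Q P)" using efix by blast
      show ?case using node_step[OF fe _ Suc.IH, of "vl ! Suc k"] ek k by simp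
    qed
  qed
  moreover have "x = vl ! length el" using pth(3) d(1,2) by (simp add: last_conv_nth)
  ultimately show ?thesis by simp
qed

lemma fixE:
  assumes ed: "ed \<in> rep_fixed FT Fe Se E P (AutQ G Q P)"
  shows "ed \<in> ImE"
proof -
  obtain e \<gamma> where e: "ed = (e, cls FT (Fe e) P (Se e) \<gamma>)" "e \<in> E" "(P, Se e, \<gamma>) \<in> FT"
    using ed unfolding rep_fixed_def rep_nodes_def by blast
  obtain vv where vv: "vv \<in> ends e" using ends_V(2)[OF e(2)] by blast
  note ef = e_facts[OF e(2) vv]
  interpret cv: clsctx G S FT "Sv vv" "Fv vv" by (rule famD(1)[OF fam_V ef(1)])
  define u where "u = (vv, cls FT (Fv vv) P (Sv vv) \<gamma>)"
  have uRN: "u \<in> RN ed" unfolding u_def using RN_node[OF e(2,3)] e(1) vv by simp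
  have gv: "(P, Sv vv, \<gamma>) \<in> FT" by (rule to_Sv[OF e(2) vv e(3)])
  have uF: "u \<in> rep_fixed FT Fv Sv V P (AutQ G Q P)" unfolding rep_fixed_def
  proof (intro CollectI conjI ballI)
    show "u \<in> RV" unfolding u_def rep_nodes_def using ef(1) gv by blast
    fix \<psi> assume "\<psi> \<in> AutQ G Q P"
    then obtain g where g: "g \<in> Q" "\<psi> = restrict (conjm G g) P" unfolding AutQ_def by blast
    have m: "compose P \<gamma> \<psi> \<in> cls FT (Fe e) P (Se e) \<gamma>" using fixed_conj[OF ed e g(1)] g(2) by simp
    have m2: "compose P \<gamma> \<psi> \<in> cls FT (Fv vv) P (Sv vv) \<gamma>"
      by (rule cls_mono[OF ef(4) m FT_fs ef(2) ef(3) is_group])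
    have "rep_act FT Fv Sv P \<psi> u = (vv, cls FT (Fv vv) P (Sv vv) (compose P \<gamma> \<psi>))"
      unfolding u_def using act_node[OF fam_V ef(1) gv conjQ[OF g(1)]] g(2) by simp
    then show "rep_act FT Fv Sv P \<psi> u = u" unfolding u_def using cv.cls_eq[OF gv m2] by simp
  qed
  have "u \<in> ImV" by (rule fixV[OF uF])
  then show ?thesis using node_step[OF ed uRN _ uRN] by blast
qed

theorem main_result:
  "ImV = rep_fixed FT Fv Sv V P (AutQ G Q P) \<and> ImE = rep_fixed FT Fe Se E P (AutQ G Q P)"
  using img_sub_fixed[OF fam_V] img_sub_fixed[OF fam_E] fixV fixE by blast

end


theorem proposition4p2:
  fixes G :: "('g, 'b) monoid_scheme" and p :: nat and S :: "'g set"
    and V :: "'v set" and E :: "'e set" and ends :: "'e \<Rightarrow> 'v set"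
    and Sv :: "'v \<Rightarrow> 'g set" and Se :: "'e \<Rightarrow> 'g set"
    and Fv :: "'v \<Rightarrow> 'g fus" and Fe :: "'e \<Rightarrow> 'g fus"
    and P Q :: "'g set"
  assumes grp: "group G" and prime: "Factorial_Ring.prime p"
    and S_sub: "subgroup S G" and S_fin: "finite S" and S_p: "\<exists>n. card S = p ^ n"
    and T_fin: "finite V" "finite E" and T_tree: "utree V E ends"
    and Sv_sub: "\<forall>v\<in>V. sgrp G S (Sv v)"
    and Se_sub: "\<forall>e\<in>E. sgrp G S (Se e) \<and> (\<forall>v\<in>ends e. Se e \<subseteq> Sv v)"
    and Fv_fus: "\<forall>v\<in>V. fusion_system G (Sv v) (Fv v)"
    and Fe_fus: "\<forall>e\<in>E. fusion_system G (Se e) (Fe e) \<and> (\<forall>v\<in>ends e. Fe e \<subseteq> Fv v)"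
    and H: "\<exists>vs\<in>V. Sv vs = S \<and>
              (\<forall>v\<in>V - {vs}. \<exists>us es. upath V E ends us es \<and> hd us = v \<and> last us = vs \<and>
                  Se (hd es) = Sv v)"
    and sat: "\<forall>v\<in>V. saturated p G (Sv v) (Fv v)"
    and Fe_triv: "\<forall>e\<in>E. Fe e = FS G (Se e)"
    and Q_sub: "sgrp G S Q" and P_sub: "sgrp G S P" and PQ: "P \<subseteq> Q"
    and P_normal: "\<forall>g\<in>Q. conjm G g ` P = P"
    and P_centric: "centric G S (completion G S V Fv) P"
    and Rep_tree: "utree (rep_nodes (completion G S V Fv) Fv Sv V P)
                         (rep_nodes (completion G S V Fv) Fe Se E P)
                         (rep_ends (completion G S V Fv) Fv Sv ends P)"
  shows "rep_res (completion G S V Fv) Fv Sv P ` rep_nodes (completion G S V Fv) Fv Sv V Q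
           = rep_fixed (completion G S V Fv) Fv Sv V P (AutQ G Q P)
       \<and> rep_res (completion G S V Fv) Fe Se P ` rep_nodes (completion G S V Fv) Fe Se E Q
           = rep_fixed (completion G S V Fv) Fe Se E P (AutQ G Q P)"
proof -
  obtain vs0 where vs0: "vs0 \<in> V" "Sv vs0 = S" using H by blast
  interpret m: main G p S V E ends Sv Se Fv Fe P Q vs0
    by (intro main.intro main_axioms.intro grp)
      (fact S_sub S_fin T_tree Sv_sub Se_sub Fv_fus Fe_fus vs0 sat Fe_triv
        Q_sub P_sub PQ P_normal P_centric Rep_tree)+
  show ?thesis by (rule m.main_result)
qed

end
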